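(* On $E_7:\ v^2=u(1-11u+32u^2)$ let $\Phi_7=\dfrac{128(1-4u)(-v-3u+4uv+20u^2)^7}{u^3(1-8u)(1-4v-20u+64u^2)^7}$ and $F_3=1-4v-4u$, $\widetilde F_3=1+4v-4u$, $F_4=1-2v-6u$, $\widetilde F_4=1+2v-6u$, $G_3=1+2v-10u+16u^2$, $G_4=1-4v-20u+64u^2$, $\widehat G_4=v-5u-8uv+24u^2$. Then in a neighborhood of $(u,v)=(0,0)$ on $E_7$ (where $\Phi_7$ vanishes), with branches of the radical factors chosen so that each right-hand side is holomorphic at $(0,0)$ and takes the value $1$ there: $${}_3F_2\!\left(-\tfrac1{14},\tfrac1{14},\tfrac5{14};\tfrac17,\tfrac57;\Phi_7\right)=\frac{F_3^{1/14}F_4^{1/7}\widetilde F_4^{3/7}}{\sqrt{G_4}},$$ $${}_3F_2\!\left(\tfrac3{14},\tfrac5{14},\tfrac9{14};\tfrac37,\tfrac97;\Phi_7\right)=\frac{(1-4u)^{4/7}F_3^{1/14}\widetilde F_4^{4/7}G_4^{3/2}}{\widetilde F_3^{4/7}G_3^2},$$ $${}_3F_2\!\left(\tfrac{11}{14},\tfrac{13}{14},\tfrac{17}{14};\tfrac{11}7,\tfrac{13}7;\Phi_7\right)=\frac{(1-8u)\widetilde F_3^{5/14}\widehat G_4^{11/2}}{u^{16/7}(v-u)^{1/14}(v+u)^{6/7}G_3^6}.$$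
   Context: ${}_3F_2(\alpha_1,\alpha_2,\alpha_3;\beta_1,\beta_2;z)=\sum_{n\ge0}\frac{(\alpha_1)_n(\alpha_2)_n(\alpha_3)_n}{(\beta_1)_n(\beta_2)_n n!}z^n$. A local parameter of $E_7$ at $(0,0)$ is $\sqrt u$ (equivalently $v$). *)

theory Defs
  imports "HOL-Analysis.Analysis"
begin

definition hyp3F2 :: "complex \<Rightarrow> complex \<Rightarrow> complex \<Rightarrow> complex \<Rightarrow> complex \<Rightarrow> complex \<Rightarrow> complex" where
  "hyp3F2 a1 a2 a3 b1 b2 z =
     (\<Sum>n. pochhammer a1 n * pochhammer a2 n * pochhammer a3 n
            / (pochhammer b1 n * pochhammer b2 n * fact n) * z ^ n)"

definition Phi7 :: "complex \<Rightarrow> complex \<Rightarrow> complex" where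
  "Phi7 u v = 128 * (1 - 4*u) * (20*u^2 + 4*u* v - 3*u - v) ^ 7
             / (u^3 * (1 - 8*u) * (1 - 4* v - 20*u + 64*u^2) ^ 7)"

definition F3 :: "complex \<Rightarrow> complex \<Rightarrow> complex" where "F3 u v = 1 - 4* v - 4*u"
definition F3t :: "complex \<Rightarrow> complex \<Rightarrow> complex" where "F3t u v = 1 + 4* v - 4*u"
definition F4 :: "complex \<Rightarrow> complex \<Rightarrow> complex" where "F4 u v = 1 - 2* v - 6*u"
definition F4t :: "complex \<Rightarrow> complex \<Rightarrow> complex" where "F4t u v = 1 + 2* v - 6*u"
definition G3 :: "complex \<Rightarrow> complex \<Rightarrow> complex" where "G3 u v = 1 + 2* v - 10*u + 16*u^2"
definition G4 :: "complex \<Rightarrow> complex \<Rightarrow> complex" where "G4 u v = 1 - 4* v - 20*u + 64*u^2"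
definition G4h :: "complex \<Rightarrow> complex \<Rightarrow> complex" where "G4h u v = v - 5*u - 8*u* v + 24*u^2"

end

theory Submission
  imports Defs "HOL-Complex_Analysis.Complex_Analysis"
begin


lemma fps_X_deriv_nth: "fps_nth (fps_X * fps_deriv (F::complex fps)) n = of_nat n * fps_nth F n"
  by (cases n) (simp_all add: fps_X_mult_nth)

lemma hyp_unique:
  fixes g g1 g2 g3 :: "complex \<Rightarrow> complex" and a1 a2 a3 b1 b2 :: complex and \<delta>::real
  assumes "\<delta> > 0" and hol: "g holomorphic_on ball 0 \<delta>" "g1 holomorphic_on ball 0 \<delta>"
     "g2 holomorphic_on ball 0 \<delta>" "g3 holomorphic_on ball 0 \<delta>"
  and g0: "g 0 = 1"
  and ode: "\<forall>z\<in>ball 0 \<delta>. z * deriv g z = g1 z \<and> z * deriv g1 z = g2 z \<and> z * deriv g2 z = g3 z \<and>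
     g3 z + (b1+b2-2)*g2 z + (b1-1)*(b2-1)*g1 z
       = z*(g3 z + (a1+a2+a3)*g2 z + (a1*a2+a1*a3+a2*a3)*g1 z + a1*a2*a3*g z)"
  and b1: "\<forall>n::nat. of_nat n + b1 \<noteq> 0" and b2: "\<forall>n::nat. of_nat n + b2 \<noteq> 0"
  shows "\<forall>z\<in>ball 0 \<delta>. hyp3F2 a1 a2 a3 b1 b2 z = g z"
proof -
  define A where "A = fps_expansion g 0"
  define A1 where "A1 = fps_expansion g1 0"
  define A2 where "A2 = fps_expansion g2 0"
  define A3 where "A3 = fps_expansion g3 0"
  have ev: "eventually (\<lambda>z. z \<in> ball 0 \<delta>) (nhds 0)"
    using \<open>\<delta>>0\<close> by (intro eventually_nhds_in_open) auto
  have eA: "g has_fps_expansion A" unfolding A_def using hol \<open>\<delta>>0\<close> by (intro has_fps_expansion_fps_expansion) auto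
  have eA1: "g1 has_fps_expansion A1" unfolding A1_def using hol \<open>\<delta>>0\<close> by (intro has_fps_expansion_fps_expansion) auto
  have eA2: "g2 has_fps_expansion A2" unfolding A2_def using hol \<open>\<delta>>0\<close> by (intro has_fps_expansion_fps_expansion) auto
  have eA3: "g3 has_fps_expansion A3" unfolding A3_def using hol \<open>\<delta>>0\<close> by (intro has_fps_expansion_fps_expansion) auto
  have uniq: "fps_nth F n = fps_nth G n" if "f has_fps_expansion F" "f has_fps_expansion G" for f :: "complex \<Rightarrow> complex" and F G n
    using fps_nth_fps_expansion[OF that(1)] fps_nth_fps_expansion[OF that(2)] by simp
  have step: "fps_nth H1 n = of_nat n * fps_nth H n"
    if "h has_fps_expansion H" "h1 has_fps_expansion H1" "\<forall>z\<in>ball 0 \<delta>. z * deriv h z = h1 z" for h h1 :: "complex \<Rightarrow> complex" and H H1 n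
  proof -
    have "(\<lambda>z. z * deriv h z) has_fps_expansion fps_X * fps_deriv H"
      by (intro has_fps_expansion_mult has_fps_expansion_deriv that has_fps_expansion_fps_X)
    moreover have "eventually (\<lambda>z. z * deriv h z = h1 z) (nhds 0)"
      using ev by eventually_elim (use that(3) in auto)
    ultimately have "h1 has_fps_expansion fps_X * fps_deriv H"
      using has_fps_expansion_cong[of "\<lambda>z. z * deriv h z" h1 "fps_X * fps_deriv H" "fps_X * fps_deriv H"] by blast
    then show ?thesis using uniq[OF that(2)] fps_X_deriv_nth by metis
  qed
  have c1: "fps_nth A1 n = of_nat n * fps_nth A n" for n using step[OF eA eA1] ode by blast
  have c2: "fps_nth A2 n = of_nat n * fps_nth A1 n" for n using step[OF eA1 eA2] ode by blast
  have c3: "fps_nth A3 n = of_nat n * fps_nth A2 n" for n using step[OF eA2 eA3] ode by blast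
  define B where "B = A3 + fps_const (b1+b2-2) * A2 + fps_const ((b1-1)*(b2-1)) * A1
       - fps_X * (A3 + fps_const (a1+a2+a3) * A2 + fps_const (a1*a2+a1*a3+a2*a3) * A1 + fps_const (a1*a2*a3) * A)"
  have "(\<lambda>z. g3 z + (b1+b2-2)*g2 z + (b1-1)*(b2-1)*g1 z
       - z*(g3 z + (a1+a2+a3)*g2 z + (a1*a2+a1*a3+a2*a3)*g1 z + a1*a2*a3*g z)) has_fps_expansion B"
    unfolding B_def
    by (intro has_fps_expansion_add has_fps_expansion_diff has_fps_expansion_mult has_fps_expansion_const
         eA eA1 eA2 eA3 has_fps_expansion_fps_X)
  moreover have "(\<lambda>z. g3 z + (b1+b2-2)*g2 z + (b1-1)*(b2-1)*g1 z
       - z*(g3 z + (a1+a2+a3)*g2 z + (a1*a2+a1*a3+a2*a3)*g1 z + a1*a2*a3*g z)) has_fps_expansion 0"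
    unfolding has_fps_expansion_0_iff
  proof (rule eventually_mono[OF ev])
    fix z :: complex assume "z \<in> ball 0 \<delta>"
    then have "g3 z + (b1+b2-2)*g2 z + (b1-1)*(b2-1)*g1 z
       = z*(g3 z + (a1+a2+a3)*g2 z + (a1*a2+a1*a3+a2*a3)*g1 z + a1*a2*a3*g z)" using ode by blast
    then show "g3 z + (b1+b2-2)*g2 z + (b1-1)*(b2-1)*g1 z
       - z*(g3 z + (a1+a2+a3)*g2 z + (a1*a2+a1*a3+a2*a3)*g1 z + a1*a2*a3*g z) = 0" by simp
  qed
  ultimately have B0: "fps_nth B n = 0" for n using uniq[of _ B 0 n] by simp
  have rec: "fps_nth A (Suc m) * ((of_nat m + 1) * (of_nat m + b1) * (of_nat m + b2))
          = fps_nth A m * ((of_nat m + a1) * (of_nat m + a2) * (of_nat m + a3))" for m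
  proof -
    have "fps_nth B (Suc m) = 0" by (rule B0)
    then have "fps_nth A3 (Suc m) + (b1+b2-2) * fps_nth A2 (Suc m) + (b1-1)*(b2-1) * fps_nth A1 (Suc m)
       - (fps_nth A3 m + (a1+a2+a3) * fps_nth A2 m + (a1*a2+a1*a3+a2*a3) * fps_nth A1 m + (a1*a2*a3) * fps_nth A m) = 0"
      unfolding B_def by (simp add: fps_X_mult_nth)
    then show ?thesis unfolding c3 c2 c1 by (simp add: algebra_simps)
  qed
  have coef: "fps_nth A n = pochhammer a1 n * pochhammer a2 n * pochhammer a3 n
            / (pochhammer b1 n * pochhammer b2 n * fact n)" for n
  proof (induction n)
    case 0
    have "fps_nth A 0 = g 0" using fps_nth_fps_expansion[OF eA, of 0] by simp
    then show ?case using g0 by simp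
  next
    case (Suc m)
    have f1: "(of_nat m + 1::complex) \<noteq> 0"
      by (metis of_nat_Suc of_nat_eq_0_iff nat.distinct(1) add.commute)
    have f2: "of_nat m + b1 \<noteq> 0" "of_nat m + b2 \<noteq> 0" using b1 b2 by auto
    have nz: "(of_nat m + 1) * (of_nat m + b1) * (of_nat m + b2) \<noteq> (0::complex)"
      using f1 f2 by simp
    have nz2: "pochhammer b1 m \<noteq> 0" "pochhammer b2 m \<noteq> 0"
      using b1 b2 unfolding pochhammer_eq_0_iff by (metis add.commute add_eq_0_iff)+
    have nz3: "(fact m :: complex) \<noteq> 0" by simp
    have "fps_nth A (Suc m) = fps_nth A m * ((of_nat m + a1) * (of_nat m + a2) * (of_nat m + a3)) /
           ((of_nat m + 1) * (of_nat m + b1) * (of_nat m + b2))"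
      using rec[of m] nz by (simp add: eq_divide_eq)
    also have "\<dots> = pochhammer a1 (Suc m) * pochhammer a2 (Suc m) * pochhammer a3 (Suc m)
            / (pochhammer b1 (Suc m) * pochhammer b2 (Suc m) * fact (Suc m))"
      unfolding Suc pochhammer_Suc fact_Suc using f1 f2 nz2 nz3
      by (simp add: field_simps)
    finally show ?case .
  qed
  show ?thesis
  proof
    fix z :: complex assume z: "z \<in> ball 0 \<delta>"
    have "(\<lambda>n. (deriv ^^ n) g 0 / fact n * (z - 0)^n) sums g z"
      by (rule holomorphic_power_series[OF hol(1) z])
    moreover have "(deriv ^^ n) g 0 / fact n = fps_nth A n" for n
      using fps_nth_fps_expansion[OF eA] by simp
    ultimately have "(\<lambda>n. fps_nth A n * z ^ n) sums g z" by simp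
    then show "hyp3F2 a1 a2 a3 b1 b2 z = g z"
      unfolding hyp3F2_def coef[symmetric] by (simp add: sums_iff)
  qed
qed




fun pe :: "int list \<Rightarrow> complex \<Rightarrow> complex" where
  "pe [] x = 0"
| "pe (a # p) x = of_int a + x * pe p x"

fun padd :: "int list \<Rightarrow> int list \<Rightarrow> int list" where
  "padd [] q = q"
| "padd p [] = p"
| "padd (a # p) (b # q) = (a + b) # padd p q"

definition psm :: "int \<Rightarrow> int list \<Rightarrow> int list" where
  "psm c p = map (\<lambda>x. c * x) p"

fun pmul :: "int list \<Rightarrow> int list \<Rightarrow> int list" where
  "pmul [] q = []"
| "pmul (a # p) q = padd (psm a q) (0 # pmul p q)"

fun pder :: "int list \<Rightarrow> int list" where
  "pder [] = []"
| "pder (a # p) = padd p (0 # pder p)"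

lemma pe_padd [simp]: "pe (padd p q) x = pe p x + pe q x"
  by (induction p q rule: padd.induct) (auto simp: algebra_simps)

lemma pe_psm [simp]: "pe (psm c p) x = of_int c * pe p x"
  by (induction p) (auto simp: psm_def algebra_simps)

lemma pe_pmul [simp]: "pe (pmul p q) x = pe p x * pe q x"
  by (induction p) (auto simp: algebra_simps)

lemma pe_deriv: "(pe p has_field_derivative pe (pder p) x) (at x)"
proof (induction p)
  case Nil then show ?case by simp
next
  case (Cons a p)
  have "((\<lambda>x. x * pe p x) has_field_derivative (1 * pe p x + pe (pder p) x * x)) (at x)"
    by (rule DERIV_mult[OF DERIV_ident Cons])
  then have "((\<lambda>x. of_int a + x * pe p x) has_field_derivative (0 + (1 * pe p x + pe (pder p) x * x))) (at x)"
    by (rule DERIV_add[OF DERIV_const])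
  moreover have "pe (a # p) = (\<lambda>x. of_int a + x * pe p x)" by (rule ext) simp
  ultimately show ?case by (simp add: algebra_simps)
qed

lemma pe_holo [holomorphic_intros]: "f holomorphic_on S \<Longrightarrow> (\<lambda>x. pe p (f x)) holomorphic_on S"
proof (induction p)
  case Nil then show ?case by simp
next
  case (Cons a p) then show ?case by (simp, intro holomorphic_intros) auto
qed

lemma pe_cont: "continuous_on S f \<Longrightarrow> continuous_on S (\<lambda>x. pe p (f x))"
  by (induction p) (auto intro!: continuous_intros)

type_synonym pr = "int list \<times> int list"

definition cc :: "int list" where "cc = [0,1,-11,32]"
definition CCp :: "int list" where "CCp = [1,-22,96]"

definition ev :: "pr \<Rightarrow> complex \<Rightarrow> complex \<Rightarrow> complex" where
  "ev P u v = pe (fst P) u + pe (snd P) u * v"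

definition add2 :: "pr \<Rightarrow> pr \<Rightarrow> pr" where "add2 P Q = (padd (fst P) (fst Q), padd (snd P) (snd Q))"
definition sm2 :: "int \<Rightarrow> pr \<Rightarrow> pr" where "sm2 c P = (psm c (fst P), psm c (snd P))"
definition mul2 :: "pr \<Rightarrow> pr \<Rightarrow> pr" where
  "mul2 P Q = (padd (pmul (fst P) (fst Q)) (pmul (pmul (snd P) (snd Q)) cc),
               padd (pmul (fst P) (snd Q)) (pmul (snd P) (fst Q)))"
definition d2 :: "pr \<Rightarrow> pr" where
  "d2 P = (padd (psm 2 (pmul (pder (snd P)) cc)) (pmul (snd P) CCp), psm 2 (pder (fst P)))"
fun pow2 :: "pr \<Rightarrow> nat \<Rightarrow> pr" where
  "pow2 P 0 = ([1],[])"
| "pow2 P (Suc n) = mul2 P (pow2 P n)"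

definition curve :: "complex \<Rightarrow> complex \<Rightarrow> bool" where "curve u v \<longleftrightarrow> v^2 = pe cc u"

lemma ev_add2 [simp]: "ev (add2 P Q) u v = ev P u v + ev Q u v"
  by (simp add: ev_def add2_def algebra_simps)
lemma ev_sm2 [simp]: "ev (sm2 c P) u v = of_int c * ev P u v"
  by (simp add: ev_def sm2_def algebra_simps)
lemma ev_mul2 [simp]: "curve u v \<Longrightarrow> ev (mul2 P Q) u v = ev P u v * ev Q u v"
  by (simp add: ev_def mul2_def curve_def algebra_simps power2_eq_square)
lemma ev_pow2 [simp]: "curve u v \<Longrightarrow> ev (pow2 P n) u v = ev P u v ^ n"
proof (induction n)
  case 0 then show ?case by (simp add: ev_def)
next
  case (Suc n) then show ?case by simp
qed

definition pz :: "pr \<Rightarrow> bool" where "pz P \<longleftrightarrow> list_all (\<lambda>x. x = 0) (fst P) \<and> list_all (\<lambda>x. x = 0) (snd P)"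

lemma pe_zero: "list_all (\<lambda>x. x = 0) p \<Longrightarrow> pe p x = 0"
  by (induction p) auto

lemma ev_eqI: "pz (add2 P (sm2 (-1) Q)) \<Longrightarrow> ev P u v = ev Q u v"
proof -
  assume "pz (add2 P (sm2 (-1) Q))"
  then have "ev (add2 P (sm2 (-1) Q)) u v = 0" unfolding pz_def ev_def by (simp add: pe_zero)
  then show ?thesis by simp
qed



definition pU :: pr where "pU = ([0,1], [])"
definition pV :: pr where "pV = ([], [1])"
definition pK :: pr where "pK = ([0,-3,20], [-1,4])"
definition pG4 :: pr where "pG4 = ([1,-20,64], [-4])"
definition pF3 :: pr where "pF3 = ([1,-4], [-4])"
definition pF3t :: pr where "pF3t = ([1,-4], [4])"
definition pF4 :: pr where "pF4 = ([1,-6], [-2])"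
definition pF4t :: pr where "pF4t = ([1,-6], [2])"
definition pG3 :: pr where "pG3 = ([1,-10,16], [2])"
definition pG4h :: pr where "pG4h = ([0,-5,24], [1,-8])"
definition pom4 :: pr where "pom4 = ([1,-4], [])"
definition pom8 :: pr where "pom8 = ([1,-8], [])"
definition pvmu :: pr where "pvmu = ([0,-1], [1])"
definition pvpu :: pr where "pvpu = ([0,1], [1])"
definition pQ :: pr where "pQ = ([-1,-96,2656,-25728,116736,-229376,49152,262144], [-48,800,-2688,-22528,188416,-376832])"
definition A1_1 :: pr where "A1_1 = ([0,-104,2384,-21760,98048,-212992,188416,-131072], [-16,144,128,-3840,12288,-24576])"
definition k1_1 :: int where "k1_1 = 7"
definition A1_2 :: pr where "A1_2 = ([0,-1600,-97888,9227520,-244240896,2340708352,18938757120,-802438119424,10076320694272,-58123637227520,-54367847710720,3995402084810752,-37793723098071040,210696051345063936,-795225882187792384,2086523390461476864,-3735885424485203968,4291871071256182784,-2750072095114264576,666180901129945088,17732923532771328,4503599627370496], [-112,-27488,1651200,-46999040,1205551104,-32160808960,705186103296,-11287484170240,131003788034048,-1121439453282304,7181984887472128,-34619626302210048,125158429718216704,-334048339941130240,635610114190999552,-799995314520981504,543446816167821312,-14144117579710464,-231724274577047552,97671816918597632])"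
definition k1_2 :: int where "k1_2 = 49"
definition A1_3 :: pr where "A1_3 = ([0,51856,-11110400,538092288,-25025222656,2876837920768,-243424686260224,12975555874914304,-482887632290316288,13489029010016960512,-296025680303441838080,5260965701190674284544,-77358338544198964215808,956210968742716948611072,-10056252689501024080101376,90803590881383795031801856,-708608138788593816022548480,4799333311262580144003350528,-28267108564708787221539323904,144746331905916589540739383296,-642895099875319835743777456128,2465908721599053605651647299584,-8116192035160412027165167583232,22730684269402544889645919895552,-53595661138007314376544640565248,104990100917772456258768251912192,-168117943887616554974348469862400,215875079763584620067581935484928,-217964256993221912466940537864192,171545830347583678084310152249344,-109341741732974594674159247163392,64283537702403770329098459545600,-37881081712358501771799913562112,17938169457578746844982758342656,-4370943836365868658900661698560,-154742504910672534362390528], [-784,215424,-70167296,1795715072,286875320320,-27310765195264,1222063265284096,-34615299569352704,655911896244813824,-7590780657941348352,15046289571450978304,1517990124955644198912,-39840564253946655277056,634589811451613761503232,-7609339542835450473349120,73470096279358518157377536,-589278419599374410756128768,3992736195163834657913438208,-23062048785007185291884101632,113996307468427476785933844480,-482157083522639790547379683328,1738727565799689801988346740736,-5309693931501865620716889571328,13593615350131977136750425276416,-28776571500193044200176882810880,49442459815018214639375719858176,-67209576419193386969823252054016,69695041349984261418957821444096,-52156083193345595279963269890048,25648861277975159896932024844288,-6845708756425898439199567118336,489016689778943026143168561152,124171188784257791792420749312,-59488821731596672428941508608])"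
definition k1_3 :: int where "k1_3 = 343"
definition A2_1 :: pr where "A2_1 = ([0,184,-4080,34432,-133632,161792,434176,-1179648], [80,-1392,6528,17408,-247808,581632])"
definition k2_1 :: int where "k2_1 = 7"
definition A2_2 :: pr where "A2_2 = ([0,-4384,-2044896,150433280,-4804919296,91251986432,-1146651836416,9958397050880,-61402408288256,298756004118528,-1704279517691904,14387148807471104,-116116064076562432,692729249332723712,-2902939567545909248,8299082121134211072,-14929672458268049408,12254032902307708928,8796735136998621184,-29652051790328233984,20162334056760999936,364791569817010176], [560,-399584,19184640,-359705600,1887653888,47415459840,-1165204914176,12563085262848,-71977771466752,94536982331392,1940544909475840,-17201921962016768,66769563731099648,-74446111250579456,-520268114621890560,2952408073148301312,-7277414576574955520,9289659393870135296,-4823707044634689536,-348184546191081472])"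
definition k2_2 :: int where "k2_2 = 49"
definition A2_3 :: pr where "A2_3 = ([0,-486416,64206464,15827235584,-2061468681216,113714876506112,-3865921344094208,91404395490050048,-1580748353845592064,20180944109566951424,-181015868530537529344,843398372887401332736,5644182428364975374336,-190265478987524987682816,2800161023289025366065152,-31387455316108010061824000,296875365382636885153677312,-2426330099973100284426584064,17076648392121625180071002112,-102252218084987203518260576256,513486364917558996059365048320,-2126754415943066356366926938112,7096381242994728104830101880832,-18298853804561030128503997071360,33078112355801658924975465168896,-27774436824376711145073439408128,-50614507065903048563900607889408,235369202408171534821491837239296,-418623453321357538502486020587520,327127254364417808527864937578496,164009981156367234179553854226432,-662053748640830032835998958747648,625588104667801939545887275483136,-201257429724064992457903984082944,-20983809021378964437044979302400,-112807286079880277550182694912], [3920,-10539264,3179750144,-207736916992,5008520355840,47936707117056,-7401392454369280,281156121537282048,-6885312165354405888,127237325275332083712,-1903116052624350117888,24073998536385239187456,-265436387425781012234240,2595767598434912210780160,-22606609809706965559934976,174123711333978738727583744,-1170758365250039867712208896,6771010839604619667641991168,-33201553496750822476440666112,136124307628596313028133126144,-460318754184968240346643300352,1269797716478259283991055040512,-2870907515278816078554042728448,5682959597210857913932421529600,-11912119480418720443063414554624,30446573367621932443136931397632,-79502627618201378936289249722368,169194306710700275080373192359936,-261621530898926834760808063303680,270241027572777065846614467280896,-160668008498543175276732593733632,31645293939141886792934262571008,10580632412294278312170874732544,-263806956653025919987682902016])"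
definition k2_3 :: int where "k2_3 = 343"
definition A3_1 :: pr where "A3_1 = ([0,816,-20032,191616,-889088,1886208,-909312,-1441792], [272,-4352,11264,158464,-1169408,2252800])"
definition k3_1 :: int where "k3_1 = 7"
definition A3_2 :: pr where "A3_2 = ([0,-64464,-26980800,1918390784,-55911318016,870023278592,-6591149785088,-12370954420224,899756980699136,-11001704940044288,75679578688847872,-300570368626655232,333627741846896640,3815746434007826432,-27604447770005471232,98502307222474719232,-212755074463656050688,262232047679971524608,-112689694398669127680,-114172513372073885696,122051772026391101440,544935554911830016], [1904,-4139840,157523712,-480829952,-87251660800,2476125044736,-34772918337536,284444136046592,-1146337282228224,-2238276471619584,62438635613454336,-416167792518103040,1454606189009567744,-1899726303456657408,-6759122696665038848,41216149392543711232,-98905013767148404736,121996884405932523520,-62312437762995781632,-2572962762112106496])"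
definition k3_2 :: int where "k3_2 = 49"
definition A3_3 :: pr where "A3_3 = ([0,-2713200,1641833536,606453246720,-67195109459968,2946579125805056,-65737872620077056,489593306619576320,15709705841529061376,-629370572890276102144,12046259098874621722624,-150598263722949275025408,1257326568486424148967424,-5721330224901962019635200,-13022715967709609180790784,493076998568742078866522112,-4730749954765853370206912512,26611820945833718088508375040,-77108704106870596497037066240,-139031967056655643658376183808,2972707412761939002893585612800,-17997671232805011159107164438528,64312364321968400570671316336640,-119527758218321132734536094842880,-121116888501188662970587214249984,1750794669313475651302878510841856,-6818076877652822525885758308352000,16467273806155357481701106698420224,-26640618022066332685402458701168640,27082041042154441461552615943831552,-11758249647646673096593806356119552,-8045971013160491433893884539699200,13637291572343091075983346669453312,-5530311695629520607830504338620416,-157398186108542939480084476592128,-205962274036105143236341792768], [13328,-79303232,76654291200,-3533336258560,-69393206173696,10519976514863104,-415038327240654848,9239493006462025728,-125051111972309827584,795078158780368683008,6271490082594694889472,-235335742276160960069632,3321340737491056598188032,-30140509470889371968208896,184886218963439415560503296,-663356860708878322583470080,-138635017036564988814163968,18627388114450128860881092608,-120364391244670848464393863168,323465392267852538404082286592,715948555969176110897349787648,-11594132355661262009029560893440,61031224191550463672055188422656,-196679355076438240761671351009280,388799481193664545564734955454464,-263126450021127555728694988242944,-1071787551610293574821588542423040,4299153372951942375331946460872704,-8156795675219141262141183039111168,9239804702289006157493452371132416,-5874576204292668770729263426961408,1403898027530903417835460069687296,238114330789363551100732029534208,1697592978715976121189207638016])"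
definition k3_3 :: int where "k3_3 = 343"



lemma pder_cc: "pe (pder cc) x = pe CCp x" by (simp add: cc_def CCp_def)

lemma ev_at0: "ev P 0 0 = (case fst P of [] \<Rightarrow> 0 | a # _ \<Rightarrow> of_int a)"
  by (cases "fst P") (auto simp: ev_def)

locale E7 =
  fixes U :: "complex \<Rightarrow> complex" and r :: real
  assumes r: "r > 0" and holU: "U holomorphic_on ball 0 r" and U0: "U 0 = 0"
    and cur: "\<forall>v\<in>ball 0 r. v^2 = U v * (1 - 11 * U v + 32 * (U v)^2)"
begin

lemma curv: "v \<in> ball 0 r \<Longrightarrow> curve (U v) v"
  using cur by (auto simp: curve_def cc_def algebra_simps power2_eq_square)

lemma dU_has: "v \<in> ball 0 r \<Longrightarrow> (U has_field_derivative deriv U v) (at v)"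
  using holU by (intro holomorphic_derivI) auto

lemma dU: assumes v: "v \<in> ball 0 r" shows "deriv U v * pe CCp (U v) = 2 * v"
proof -
  have d1: "((\<lambda>x. pe cc (U x)) has_field_derivative pe CCp (U v) * deriv U v) (at v)"
    using DERIV_chain2[OF pe_deriv dU_has[OF v], of cc] by (simp add: pder_cc)
  have "((\<lambda>x. x^2) has_field_derivative pe CCp (U v) * deriv U v) (at v)"
  proof (rule has_field_derivative_transform_within_open[OF d1 _ v])
    show "open (ball (0::complex) r)" by simp
    fix x assume "x \<in> ball (0::complex) r"
    then show "pe cc (U x) = x^2" using curv[of x] by (simp add: curve_def)
  qed
  moreover have "((\<lambda>x. x^2) has_field_derivative 2 * v) (at v)"
    by (rule derivative_eq_intros refl | simp)+
  ultimately show ?thesis using DERIV_unique by (metis mult.commute)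
qed

lemma ev_deriv:
  assumes v: "v \<in> ball 0 r" and C: "pe CCp (U v) \<noteq> 0"
  shows "((\<lambda>x. ev P (U x) x) has_field_derivative ev (d2 P) (U v) v / pe CCp (U v)) (at v)"
proof -
  obtain A B where P: "P = (A, B)" by (cases P)
  let ?u = "U v" and ?U' = "deriv U v"
  have h: "((\<lambda>x. pe A (U x) + pe B (U x) * x) has_field_derivative
      pe (pder A) ?u * ?U' + (pe (pder B) ?u * ?U' * v + 1 * pe B ?u)) (at v)"
    by (intro DERIV_add DERIV_mult DERIV_chain2[OF pe_deriv dU_has[OF v]] DERIV_ident)
  have U': "?U' = 2 * v / pe CCp ?u" using dU[OF v] C by (simp add: field_simps)
  have cv: "v^2 = pe cc ?u" using curv[OF v] by (simp add: curve_def)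
  have "pe (pder A) ?u * ?U' + (pe (pder B) ?u * ?U' * v + 1 * pe B ?u)
      = ev (d2 P) ?u v / pe CCp ?u"
    unfolding U' P using C cv
    by (simp add: d2_def ev_def field_simps power2_eq_square)
  with h show ?thesis unfolding P ev_def by simp
qed

end



lemma ball11_nonpos: "z \<in> ball (1::complex) 1 \<Longrightarrow> z \<notin> \<real>\<^sub>\<le>\<^sub>0"
proof -
  assume "z \<in> ball (1::complex) 1"
  then have "norm (z - 1) < 1" by (simp add: dist_norm norm_minus_commute)
  moreover have "\<bar>Re (z - 1)\<bar> \<le> norm (z - 1)" by (rule abs_Re_le_cmod)
  ultimately have "Re z > 0" by simp
  then show ?thesis by (auto simp: complex_nonpos_Reals_iff)
qed

definition hfun :: "(int \<times> (complex \<Rightarrow> complex)) list \<Rightarrow> complex \<Rightarrow> complex" where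
  "hfun fl v = exp ((\<Sum>(n,f)\<leftarrow>fl. of_int n * Ln (f v)) / 14)"

definition goodfl :: "(int \<times> (complex \<Rightarrow> complex)) list \<Rightarrow> complex set \<Rightarrow> bool" where
  "goodfl fl S \<longleftrightarrow> (\<forall>(n,f)\<in>set fl. f holomorphic_on S \<and> (\<forall>v\<in>S. f v \<in> ball 1 1))"

lemma goodfl_Cons [simp]: "goodfl ((n,f)#fl) S \<longleftrightarrow> f holomorphic_on S \<and> (\<forall>v\<in>S. f v \<in> ball 1 1) \<and> goodfl fl S"
  by (auto simp: goodfl_def)
lemma goodfl_Nil [simp]: "goodfl [] S" by (simp add: goodfl_def)

lemma sumLn_holo: "goodfl fl S \<Longrightarrow> (\<lambda>v. \<Sum>(n,f)\<leftarrow>fl. of_int n * Ln (f v)) holomorphic_on S"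
proof (induction fl)
  case Nil then show ?case by simp
next
  case (Cons a fl)
  obtain n f where a: "a = (n,f)" by (cases a)
  from Cons.prems have f: "f holomorphic_on S" "\<forall>v\<in>S. f v \<in> ball 1 1" and g: "goodfl fl S" by (auto simp: a)
  have "(\<lambda>v. Ln (f v)) holomorphic_on S" using f ball11_nonpos by (intro holomorphic_intros) auto
  from holomorphic_on_add[OF holomorphic_on_mult[OF holomorphic_on_const this] Cons.IH[OF g]]
  show ?case unfolding a by simp
qed

lemma hfun_holo: "goodfl fl S \<Longrightarrow> hfun fl holomorphic_on S"
  unfolding hfun_def[abs_def] by (intro holomorphic_intros sumLn_holo) auto

lemma sumLn_deriv: "goodfl fl S \<Longrightarrow> open S \<Longrightarrow> v \<in> S \<Longrightarrow>
   ((\<lambda>v. \<Sum>(n,f)\<leftarrow>fl. of_int n * Ln (f v)) has_field_derivative (\<Sum>(n,f)\<leftarrow>fl. of_int n * (deriv f v / f v))) (at v)"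
proof (induction fl)
  case Nil then show ?case by simp
next
  case (Cons a fl)
  obtain n f where a: "a = (n,f)" by (cases a)
  from Cons.prems have f: "f holomorphic_on S" "\<forall>v\<in>S. f v \<in> ball 1 1" and g: "goodfl fl S" by (auto simp: a)
  have fd: "(f has_field_derivative deriv f v) (at v)" using f Cons.prems by (intro holomorphic_derivI) auto
  have "f v \<notin> \<real>\<^sub>\<le>\<^sub>0" using f Cons.prems ball11_nonpos by auto
  then have "((\<lambda>v. Ln (f v)) has_field_derivative inverse (f v) * deriv f v) (at v)"
    by (rule DERIV_chain2[OF has_field_derivative_Ln fd])
  note dl = this
  have "((\<lambda>v. of_int n * Ln (f v)) has_field_derivative of_int n * (deriv f v / f v)) (at v)"
    by (rule DERIV_cong[OF DERIV_cmult[OF dl]]) (simp add: divide_inverse ac_simps)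
  from DERIV_add[OF this Cons.IH[OF g Cons.prems(2,3)]] show ?case unfolding a by simp
qed

lemma hfun_deriv: "goodfl fl S \<Longrightarrow> open S \<Longrightarrow> v \<in> S \<Longrightarrow>
   (hfun fl has_field_derivative hfun fl v * ((\<Sum>(n,f)\<leftarrow>fl. of_int n * (deriv f v / f v)) / 14)) (at v)"
  unfolding hfun_def[abs_def]
  by (rule DERIV_chain2[OF DERIV_exp, where g="\<lambda>v. (\<Sum>(n,f)\<leftarrow>fl. of_int n * Ln (f v)) / 14", simplified])
     (rule DERIV_cdivide[OF sumLn_deriv])

lemma hfun_pow: "goodfl fl S \<Longrightarrow> v \<in> S \<Longrightarrow> hfun fl v ^ 14 = (\<Prod>(n,f)\<leftarrow>fl. f v powi n)"
proof -
  assume g: "goodfl fl S" and v: "v \<in> S"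
  have "hfun fl v ^ 14 = exp (\<Sum>(n,f)\<leftarrow>fl. of_int n * Ln (f v))"
    unfolding hfun_def by (simp add: exp_of_nat_mult[symmetric])
  also have "\<dots> = (\<Prod>(n,f)\<leftarrow>fl. f v powi n)" using g
  proof (induction fl)
    case Nil then show ?case by simp
  next
    case (Cons a fl)
    obtain n f where a: "a = (n,f)" by (cases a)
    from Cons.prems have f: "f v \<in> ball 1 1" and g: "goodfl fl S" using v by (auto simp: a)
    have nz: "f v \<noteq> 0" using f by auto
    have "exp (of_int n * Ln (f v)) = f v powi n"
      using complex_powr_of_int[of "f v" n] nz by (simp add: powr_def)
    then show ?case using Cons.IH[OF g] unfolding a by (simp add: exp_add)
  qed
  finally show ?thesis .
qed

lemma hfun_0: "(\<forall>(n,f)\<in>set fl. f 0 = 1) \<Longrightarrow> hfun fl 0 = 1"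
proof -
  assume "\<forall>(n,f)\<in>set fl. f 0 = 1"
  then have "(\<Sum>(n,f)\<leftarrow>fl. of_int n * Ln (f 0)) = 0"
    by (induction fl) auto
  then show ?thesis by (simp add: hfun_def)
qed




fun lsum :: "(int \<times> pr) list \<Rightarrow> pr \<times> pr" where
  "lsum [] = (([0],[]), ([1],[]))"
| "lsum ((n,P) # l) = (case lsum l of (a,b) \<Rightarrow> (add2 (mul2 (sm2 n (d2 P)) b) (mul2 a P), mul2 P b))"

lemma ev_one [simp]: "ev ([1],[]) u v = 1" by (simp add: ev_def)
lemma ev_zero [simp]: "ev ([0],[]) u v = 0" by (simp add: ev_def)

lemma lsum_eq: "curve u v \<Longrightarrow> (\<forall>(n,P)\<in>set l. ev P u v \<noteq> 0) \<Longrightarrow>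
   ev (snd (lsum l)) u v \<noteq> 0 \<and>
   ev (fst (lsum l)) u v / ev (snd (lsum l)) u v = (\<Sum>(n,P)\<leftarrow>l. of_int n * (ev (d2 P) u v / ev P u v))"
proof (induction l rule: lsum.induct)
  case 1 then show ?case by simp
next
  case (2 n P l)
  obtain a b where ab: "lsum l = (a,b)" by (cases "lsum l")
  from 2 have IH: "ev b u v \<noteq> 0" "ev a u v / ev b u v = (\<Sum>(n,P)\<leftarrow>l. of_int n * (ev (d2 P) u v / ev P u v))"
    by (auto simp: ab)
  have P: "ev P u v \<noteq> 0" using 2 by auto
  show ?case using IH P \<open>curve u v\<close> by (simp add: ab field_simps)
qed

definition flof :: "(int \<times> nat \<times> pr \<times> (complex \<Rightarrow> complex)) list \<Rightarrow> (int \<times> (complex \<Rightarrow> complex)) list" where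
  "flof fs = map (\<lambda>(n,k,P,f). (n,f)) fs"
definition plof :: "(int \<times> nat \<times> pr \<times> (complex \<Rightarrow> complex)) list \<Rightarrow> (int \<times> pr) list" where
  "plof fs = map (\<lambda>(n,k,P,f). (n,P)) fs"
definition ksum :: "(int \<times> nat \<times> pr \<times> (complex \<Rightarrow> complex)) list \<Rightarrow> int" where
  "ksum fs = (\<Sum>(n,k,P,f)\<leftarrow>fs. n * int k)"

context E7 begin

lemma factor_dlog:
  assumes S: "open S" "S \<subseteq> ball 0 r" and C: "\<forall>x\<in>S. pe CCp (U x) \<noteq> 0"
    and fh: "f holomorphic_on S" and fnz: "\<forall>x\<in>S. f x \<noteq> 0"
    and fe: "\<forall>x\<in>S. x^k * f x = ev P (U x) x"
    and v: "v \<in> S" "v \<noteq> 0"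
  shows "ev P (U v) v \<noteq> 0 \<and> deriv f v / f v = ev (d2 P) (U v) v / (pe CCp (U v) * ev P (U v) v) - of_nat k / v"
proof -
  let ?C = "pe CCp (U v)" and ?E = "ev P (U v) v" and ?E' = "ev (d2 P) (U v) v"
  have vr: "v \<in> ball 0 r" using S v by auto
  have Cv: "?C \<noteq> 0" using C v by auto
  have Ev: "?E \<noteq> 0" using fe fnz v by (metis mult_eq_0_iff power_eq_0_iff)
  have d: "((\<lambda>x. ev P (U x) x / x^k) has_field_derivative
       ((?E' / ?C) * v^k - ?E * (of_nat k * v^(k-1))) / (v^k * v^k)) (at v)"
  proof (rule DERIV_divide[OF ev_deriv[OF vr Cv]])
    show "((\<lambda>x. x^k) has_field_derivative of_nat k * v^(k-1)) (at v)"
      by (rule DERIV_cong[OF DERIV_power[OF DERIV_ident]]) simp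
    show "v^k \<noteq> 0" using v by simp
  qed
  have d2: "(f has_field_derivative ((?E' / ?C) * v^k - ?E * (of_nat k * v^(k-1))) / (v^k * v^k)) (at v)"
  proof (rule has_field_derivative_transform_within_open[OF d, of "S - {0}"])
    show "open (S - {0})" using S by (simp add: open_delete)
    show "v \<in> S - {0}" using v by auto
    fix x assume "x \<in> S - {0}"
    then show "ev P (U x) x / x ^ k = f x" using fe by (auto simp: field_simps)
  qed
  have fv: "f v = ?E / v^k" using fe v by (auto simp: field_simps)
  have "deriv f v = ((?E' / ?C) * v^k - ?E * (of_nat k * v^(k-1))) / (v^k * v^k)"
    using d2 by (rule DERIV_imp_deriv)
  then have "deriv f v / f v = ((?E' / ?C) * v^k - ?E * (of_nat k * v^(k-1))) / (v^k * v^k) / (?E / v^k)"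
    unfolding fv by simp
  also have "\<dots> = ?E' / (?C * ?E) - of_nat k * (v^(k-1) / v^k)"
    using v Cv Ev by (simp add: field_simps)
  also have "v^(k-1) / v^k = (if k = 0 then 1 else 1 / v)"
    using v by (cases k) (auto simp: field_simps)
  finally have "deriv f v / f v = ?E' / (?C * ?E) - of_nat k / v"
    by (cases "k = 0") auto
  then show ?thesis using Ev by simp
qed

lemma sum_dlog:
  assumes S: "open S" "S \<subseteq> ball 0 r" and C: "\<forall>x\<in>S. pe CCp (U x) \<noteq> 0"
    and g: "goodfl (flof fs) S"
    and fe: "\<forall>(n,k,P,f)\<in>set fs. \<forall>x\<in>S. x^k * f x = ev P (U x) x"
    and v: "v \<in> S" "v \<noteq> 0"
  shows "(\<forall>(n,P)\<in>set (plof fs). ev P (U v) v \<noteq> 0) \<and>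
     (\<Sum>(n,f)\<leftarrow>flof fs. of_int n * (deriv f v / f v))
      = (\<Sum>(n,P)\<leftarrow>plof fs. of_int n * (ev (d2 P) (U v) v / ev P (U v) v)) / pe CCp (U v) - of_int (ksum fs) / v"
  using g fe
proof (induction fs)
  case Nil then show ?case by (simp add: flof_def plof_def ksum_def)
next
  case (Cons a fs)
  obtain n k P f where a: "a = (n,k,P,f)" by (cases a) auto
  from Cons.prems have fh: "f holomorphic_on S" "\<forall>x\<in>S. f x \<in> ball 1 1" and g': "goodfl (flof fs) S"
    and fe1: "\<forall>x\<in>S. x^k * f x = ev P (U x) x"
    and fe': "\<forall>(n,k,P,f)\<in>set fs. \<forall>x\<in>S. x^k * f x = ev P (U x) x"
    by (auto simp: a flof_def)
  have fnz: "\<forall>x\<in>S. f x \<noteq> 0" using fh(2) by auto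
  note fd = factor_dlog[OF S C fh(1) fnz fe1 v]
  have Cv: "pe CCp (U v) \<noteq> 0" using C v by auto
  note IH = Cons.IH[OF g' fe']
  have e1: "(\<Sum>(n,f)\<leftarrow>flof (a#fs). of_int n * (deriv f v / f v))
     = of_int n * (deriv f v / f v) + (\<Sum>(n,f)\<leftarrow>flof fs. of_int n * (deriv f v / f v))"
    by (simp add: flof_def a)
  have e2: "(\<Sum>(n,P)\<leftarrow>plof (a#fs). of_int n * (ev (d2 P) (U v) v / ev P (U v) v))
     = of_int n * (ev (d2 P) (U v) v / ev P (U v) v) + (\<Sum>(n,P)\<leftarrow>plof fs. of_int n * (ev (d2 P) (U v) v / ev P (U v) v))"
    by (simp add: plof_def a)
  have e3: "ksum (a#fs) = n * int k + ksum fs" by (simp add: ksum_def a)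
  have e4: "set (plof (a#fs)) = insert (n,P) (set (plof fs))" by (simp add: plof_def a)
  have gen: "of_int n * (A / (C * E) - of_nat k / v) + (Y / C - of_int K / v)
      = (of_int n * (A / E) + Y) / C - of_int (n * int k + K) / v" if "C \<noteq> 0" "E \<noteq> 0" "v \<noteq> 0"
      for A C E Y :: complex and K
    using that by (simp add: field_simps)
  show ?case unfolding e1 e2 e3 e4 using IH fd Cv gen[OF Cv _ v(2)] by auto
qed

lemma hfun_dlog:
  assumes S: "open S" "S \<subseteq> ball 0 r" and C: "\<forall>x\<in>S. pe CCp (U x) \<noteq> 0"
    and g: "goodfl (flof fs) S"
    and fe: "\<forall>(n,k,P,f)\<in>set fs. \<forall>x\<in>S. x^k * f x = ev P (U x) x"
    and ks: "ksum fs = 0"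
    and v: "v \<in> S" "v \<noteq> 0"
  shows "ev (snd (lsum (plof fs))) (U v) v \<noteq> 0 \<and>
    (hfun (flof fs) has_field_derivative hfun (flof fs) v *
      (ev (fst (lsum (plof fs))) (U v) v / (14 * pe CCp (U v) * ev (snd (lsum (plof fs))) (U v) v))) (at v)"
proof -
  note sd = sum_dlog[OF S C g fe v]
  have vr: "v \<in> ball 0 r" using S v by auto
  note le = lsum_eq[OF curv[OF vr] conjunct1[OF sd]]
  have Cv: "pe CCp (U v) \<noteq> 0" using C v by auto
  have "(\<Sum>(n,f)\<leftarrow>flof fs. of_int n * (deriv f v / f v)) / 14
      = ev (fst (lsum (plof fs))) (U v) v / (14 * pe CCp (U v) * ev (snd (lsum (plof fs))) (U v) v)"
    using sd le ks Cv by (simp add: divide_simps)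
  then show ?thesis using hfun_deriv[OF g S(1) v(1)] le by (simp add: ac_simps)
qed

end



definition "pN = sm2 128 (mul2 pom4 (pow2 pK 7))"
definition "pD = mul2 (pow2 pU 3) (mul2 pom8 (pow2 pG4 7))"
definition "pDl = mul2 pom4 (mul2 pK (mul2 pom8 pG4))"

lemma ev_open:
  assumes "f holomorphic_on S" "open S" "0 \<in> S" "open A" "f 0 \<in> A"
  shows "eventually (\<lambda>v. f v \<in> A) (nhds 0)"
proof -
  have "continuous_on S f" using assms(1) by (rule holomorphic_on_imp_continuous_on)
  then have "open (S \<inter> f -` A)" using assms(2,4) by (rule continuous_open_preimage)
  moreover have "0 \<in> S \<inter> f -` A" using assms by auto
  ultimately have "eventually (\<lambda>v. v \<in> S \<inter> f -` A) (nhds 0)" by (rule eventually_nhds_in_open)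
  then show ?thesis by (rule eventually_mono) auto
qed

lemma ev_nz:
  assumes "f holomorphic_on S" "open S" "0 \<in> S" "f 0 \<noteq> 0"
  shows "eventually (\<lambda>v. f v \<noteq> 0) (nhds 0)"
proof -
  have "eventually (\<lambda>v. f v \<in> -{0}) (nhds 0)" using assms by (intro ev_open[of f S]) auto
  then show ?thesis by (rule eventually_mono) simp
qed

lemma ev_b11:
  assumes "f holomorphic_on S" "open S" "0 \<in> S" "f 0 = 1"
  shows "eventually (\<lambda>v. f v \<in> ball 1 1) (nhds 0)"
  using assms by (intro ev_open[of f S]) auto

lemma ev_ball:
  assumes "eventually P (nhds (0::complex))" shows "\<exists>e>0. \<forall>v\<in>ball 0 e. P v"
proof -
  from assms obtain d where "d > 0" "\<forall>x. dist x 0 < d \<longrightarrow> P x" unfolding eventually_nhds_metric by blast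
  then show ?thesis by (intro exI[of _ d]) (auto simp: dist_commute)
qed

context E7 begin

definition "D0 v = 1 - 11 * U v + 32 * U v ^ 2"
definition "W v = 1 / D0 v"
definition "kf v = 20 * v^3 * W v ^ 2 + 4 * v^2 * W v - 3 * v * W v - 1"
definition "fE P v = ev P (U v) v"
definition "mf v = 128 * fE pom4 v * kf v ^ 7 / (W v ^ 3 * fE pom8 v * fE pG4 v ^ 7)"
definition "phi v = Phi7 (U v) v"
definition "fvm v = 1 - v * W v"
definition "fvp v = 1 + v * W v"
definition "fg v = 1 - 5 * v * W v - 8 * v^2 * W v + 24 * v^3 * W v ^ 2"
definition "CU v = pe CCp (U v)"

lemma holo_fE [holomorphic_intros]: "S \<subseteq> ball 0 r \<Longrightarrow> fE P holomorphic_on S"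
  unfolding fE_def[abs_def] ev_def using holomorphic_on_subset[OF holU]
  by (intro holomorphic_intros) auto
lemma holo_CU [holomorphic_intros]: "S \<subseteq> ball 0 r \<Longrightarrow> CU holomorphic_on S"
  unfolding CU_def[abs_def] using holomorphic_on_subset[OF holU]
  by (intro holomorphic_intros) auto
lemma holo_D0: "S \<subseteq> ball 0 r \<Longrightarrow> D0 holomorphic_on S"
  unfolding D0_def[abs_def] using holomorphic_on_subset[OF holU]
  by (intro holomorphic_intros) auto

definition B1 :: "real \<Rightarrow> bool" where
  "B1 e \<longleftrightarrow> e > 0 \<and> e \<le> r \<and> (\<forall>v\<in>ball 0 e. D0 v \<noteq> 0 \<and> fE pom8 v \<noteq> 0 \<and> fE pG4 v \<noteq> 0)"

lemma B1_ex: "\<exists>e. B1 e"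
proof -
  have o: "open (ball (0::complex) r)" "0 \<in> ball (0::complex) r" using r by auto
  have "eventually (\<lambda>v. v \<in> ball 0 r) (nhds (0::complex))" using o by (intro eventually_nhds_in_open)
  moreover have "eventually (\<lambda>v. D0 v \<noteq> 0) (nhds 0)"
    by (rule ev_nz[OF holo_D0 o]) (auto simp: D0_def U0)
  moreover have "eventually (\<lambda>v. fE pom8 v \<noteq> 0) (nhds 0)"
    by (rule ev_nz[OF holo_fE o]) (auto simp: fE_def U0 pom8_def ev_def)
  moreover have "eventually (\<lambda>v. fE pG4 v \<noteq> 0) (nhds 0)"
    by (rule ev_nz[OF holo_fE o]) (auto simp: fE_def U0 pG4_def ev_def)
  ultimately have "eventually (\<lambda>v. v \<in> ball 0 r \<and> D0 v \<noteq> 0 \<and> fE pom8 v \<noteq> 0 \<and> fE pG4 v \<noteq> 0) (nhds 0)"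
    by eventually_elim auto
  then obtain e where e: "e > 0" "\<forall>v\<in>ball 0 e. v \<in> ball 0 r \<and> D0 v \<noteq> 0 \<and> fE pom8 v \<noteq> 0 \<and> fE pG4 v \<noteq> 0"
    using ev_ball by blast
  have "B1 (min e r)" unfolding B1_def using e r by auto
  then show ?thesis by blast
qed

context fixes e assumes B: "B1 e" begin

lemma Bsub: "ball 0 e \<subseteq> ball 0 r" using B unfolding B1_def by auto
lemma Bo: "open (ball (0::complex) e)" "0 \<in> ball (0::complex) e" using B unfolding B1_def by auto

lemma holo_W [holomorphic_intros]: "W holomorphic_on ball 0 e"
  unfolding W_def[abs_def] using B holo_D0[OF Bsub] unfolding B1_def
  by (intro holomorphic_intros) auto
lemma holo_kf: "kf holomorphic_on ball 0 e"
  unfolding kf_def[abs_def] by (intro holomorphic_intros)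
lemma holo_mf: "mf holomorphic_on ball 0 e"
proof -
  have "W v \<noteq> 0" if "v \<in> ball 0 e" for v using that B unfolding B1_def W_def by auto
  then show ?thesis
    unfolding mf_def[abs_def] using B Bsub unfolding B1_def
    by (intro holomorphic_intros holo_kf holo_fE[OF Bsub] holomorphic_on_subset[OF holU]) auto
qed
lemma holo_fvm: "fvm holomorphic_on ball 0 e" unfolding fvm_def[abs_def] by (intro holomorphic_intros)
lemma holo_fvp: "fvp holomorphic_on ball 0 e" unfolding fvp_def[abs_def] by (intro holomorphic_intros)
lemma holo_fg: "fg holomorphic_on ball 0 e" unfolding fg_def[abs_def] by (intro holomorphic_intros)

end

lemma U_W: "v \<in> ball 0 r \<Longrightarrow> D0 v \<noteq> 0 \<Longrightarrow> U v = v^2 * W v"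
  using cur by (auto simp: W_def D0_def field_simps)

lemma B1_mono: "B1 e1 \<Longrightarrow> 0 < e \<Longrightarrow> e \<le> e1 \<Longrightarrow> B1 e"
  unfolding B1_def by auto

definition "allf = [fE pF3, fE pF3t, fE pF4, fE pF4t, fE pG4, fE pG3, fE pom4, fE pom8, W, fvm, fvp, fg]"

definition G :: "real \<Rightarrow> bool" where
  "G e \<longleftrightarrow> B1 e \<and> (\<forall>v\<in>ball 0 e. CU v \<noteq> 0 \<and> fE pQ v \<noteq> 0 \<and> kf v \<noteq> 0 \<and> mf v \<noteq> 0 \<and>
      (\<forall>f\<in>set allf. f v \<in> ball 1 1))"

lemma fE0: "fE P 0 = (case fst P of [] \<Rightarrow> 0 | a # _ \<Rightarrow> of_int a)"
  by (simp add: fE_def U0 ev_at0)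

lemma W0: "W 0 = 1" by (simp add: W_def D0_def U0)

lemma G_ex: "\<exists>e. G e"
proof -
  obtain e1 where B: "B1 e1" using B1_ex by blast
  note o = Bo[OF B]
  have b: "eventually (\<lambda>v. f v \<in> ball 1 1) (nhds 0)" if "f holomorphic_on ball 0 e1" "f 0 = 1" for f
    using ev_b11[OF that(1) o that(2)] .
  have n: "eventually (\<lambda>v. f v \<noteq> 0) (nhds 0)" if "f holomorphic_on ball 0 e1" "f 0 \<noteq> 0" for f
    using ev_nz[OF that(1) o that(2)] .
  have hE: "fE P holomorphic_on ball 0 e1" for P by (rule holo_fE[OF Bsub[OF B]])
  have "eventually (\<lambda>v. \<forall>f\<in>set allf. f v \<in> ball 1 1) (nhds 0)"
    unfolding allf_def
    using b[OF hE, of pF3] b[OF hE, of pF3t] b[OF hE, of pF4] b[OF hE, of pF4t] b[OF hE, of pG4]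
      b[OF hE, of pG3] b[OF hE, of pom4] b[OF hE, of pom8] b[OF holo_W[OF B]] b[OF holo_fvm[OF B]]
      b[OF holo_fvp[OF B]] b[OF holo_fg[OF B]]
    by (simp add: fE0 W0 fvm_def fvp_def fg_def pF3_def pF3t_def pF4_def pF4t_def pG4_def pG3_def pom4_def pom8_def
        eventually_conj_iff)
  moreover have "eventually (\<lambda>v. CU v \<noteq> 0) (nhds 0)"
    by (rule n[OF holo_CU[OF Bsub[OF B]]]) (simp add: CU_def U0 CCp_def)
  moreover have "eventually (\<lambda>v. fE pQ v \<noteq> 0) (nhds 0)"
    by (rule n[OF hE]) (simp add: fE0 pQ_def)
  moreover have "eventually (\<lambda>v. kf v \<noteq> 0) (nhds 0)"
    by (rule n[OF holo_kf[OF B]]) (simp add: kf_def)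
  moreover have "eventually (\<lambda>v. mf v \<noteq> 0) (nhds 0)"
    by (rule n[OF holo_mf[OF B]]) (simp add: mf_def kf_def W0 fE0 pom4_def pom8_def pG4_def)
  ultimately have "eventually (\<lambda>v. CU v \<noteq> 0 \<and> fE pQ v \<noteq> 0 \<and> kf v \<noteq> 0 \<and> mf v \<noteq> 0 \<and>
      (\<forall>f\<in>set allf. f v \<in> ball 1 1)) (nhds 0)"
    by eventually_elim auto
  then obtain e2 where e2: "e2 > 0" "\<forall>v\<in>ball 0 e2. CU v \<noteq> 0 \<and> fE pQ v \<noteq> 0 \<and> kf v \<noteq> 0 \<and> mf v \<noteq> 0 \<and>
      (\<forall>f\<in>set allf. f v \<in> ball 1 1)" using ev_ball by blast
  have "B1 (min e1 e2)" using B1_mono[OF B] e2 B unfolding B1_def by auto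
  then have "G (min e1 e2)" unfolding G_def using e2 by auto
  then show ?thesis by blast
qed

end



lemma chk_phi: "pz (add2 (mul2 (add2 (mul2 (d2 pN) pD) (sm2 (-1) (mul2 pN (d2 pD)))) pDl) (sm2 (-1) (mul2 (mul2 pN pD) pQ)))"
  unfolding pN_def pD_def pDl_def pom4_def pK_def pU_def pom8_def pG4_def pQ_def by code_simp

context E7 begin

lemma fE_mul2 [simp]: "v \<in> ball 0 r \<Longrightarrow> fE (mul2 P Q) v = fE P v * fE Q v"
  using curv by (simp add: fE_def)
lemma fE_pow2 [simp]: "v \<in> ball 0 r \<Longrightarrow> fE (pow2 P n) v = fE P v ^ n"
  using curv by (simp add: fE_def)
lemma fE_sm2 [simp]: "fE (sm2 c P) v = of_int c * fE P v" by (simp add: fE_def)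
lemma fE_add2 [simp]: "fE (add2 P Q) v = fE P v + fE Q v" by (simp add: fE_def)

lemma fE_basic:
  "fE pU v = U v" "fE pom4 v = 1 - 4 * U v" "fE pom8 v = 1 - 8 * U v"
  "fE pK v = 20 * U v ^ 2 + 4 * U v * v - 3 * U v - v"
  "fE pG4 v = 1 - 4 * v - 20 * U v + 64 * U v ^ 2"
  by (simp_all add: fE_def ev_def pU_def pom4_def pom8_def pK_def pG4_def algebra_simps power2_eq_square)

context fixes e assumes Ge: "G e" begin

lemma GB: "B1 e" using Ge by (simp add: G_def)
lemma Gv: "v \<in> ball 0 e \<Longrightarrow> v \<in> ball 0 r \<and> D0 v \<noteq> 0 \<and> fE pom8 v \<noteq> 0 \<and> fE pG4 v \<noteq> 0 \<and>
   CU v \<noteq> 0 \<and> fE pQ v \<noteq> 0 \<and> kf v \<noteq> 0 \<and> mf v \<noteq> 0 \<and> (\<forall>f\<in>set allf. f v \<in> ball 1 1)"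
  using Ge Bsub[OF GB] unfolding G_def B1_def by blast

lemma Gom4: "v \<in> ball 0 e \<Longrightarrow> fE pom4 v \<noteq> 0"
  using Gv[of v] by (auto simp: allf_def)

lemma UW: "v \<in> ball 0 e \<Longrightarrow> U v = v^2 * W v" using Gv U_W by blast

lemma Wnz: "v \<in> ball 0 e \<Longrightarrow> W v \<noteq> 0" using Gv by (simp add: W_def)

lemma K_kf: "v \<in> ball 0 e \<Longrightarrow> fE pK v = v * kf v"
  unfolding fE_basic UW kf_def by (simp add: algebra_simps power2_eq_square power3_eq_cube)

lemma Unz: "v \<in> ball 0 e \<Longrightarrow> v \<noteq> 0 \<Longrightarrow> U v \<noteq> 0"
  using UW Wnz by simp

lemma phi_eq: "v \<in> ball 0 e \<Longrightarrow> phi v = v * mf v"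
proof (cases "v = 0")
  case True then show ?thesis by (simp add: phi_def Phi7_def U0)
next
  case False
  assume v: "v \<in> ball 0 e"
  have K: "20 * U v ^ 2 + 4 * U v * v - 3 * U v - v = v * kf v" using K_kf[OF v] by (simp add: fE_basic)
  have "phi v = 128 * fE pom4 v * (v * kf v) ^ 7 / ((v^2 * W v) ^ 3 * fE pom8 v * fE pG4 v ^ 7)"
    unfolding phi_def Phi7_def K[symmetric] UW[OF v, symmetric] fE_basic by (simp add: algebra_simps)
  also have "\<dots> = v * mf v" unfolding mf_def using False Wnz[OF v] Gv[OF v]
    by (simp add: field_simps eval_nat_numeral)
  finally show ?thesis .
qed

lemma phi_holo: "phi holomorphic_on ball 0 e"
proof -
  have "(\<lambda>v. v * mf v) holomorphic_on ball 0 e" by (intro holomorphic_intros holo_mf[OF GB])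
  then show ?thesis by (rule holomorphic_transform) (simp add: phi_eq)
qed

lemma mf0: "mf 0 = -128"
  by (simp add: mf_def kf_def W0 fE0 pom4_def pom8_def pG4_def)

lemma phi_deriv0: "deriv phi 0 = -128"
proof -
  have hm: "(mf has_field_derivative deriv mf 0) (at 0)"
    using holo_mf[OF GB] Bo[OF GB] by (intro holomorphic_derivI) auto
  have "((\<lambda>v. v * mf v) has_field_derivative 1 * mf 0 + deriv mf 0 * 0) (at 0)"
    by (rule DERIV_mult[OF DERIV_ident hm])
  then have "((\<lambda>v. v * mf v) has_field_derivative mf 0) (at 0)" by simp
  then have "(phi has_field_derivative mf 0) (at 0)"
    by (rule has_field_derivative_transform_within_open[where S="ball 0 e"]) (use Bo[OF GB] phi_eq in auto)
  then show ?thesis using mf0 DERIV_imp_deriv by metis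
qed

lemma phi_nz: "v \<in> ball 0 e \<Longrightarrow> v \<noteq> 0 \<Longrightarrow> phi v \<noteq> 0"
  using phi_eq Gv by simp

lemma phi_rat: "v \<in> ball 0 e \<Longrightarrow> v \<noteq> 0 \<Longrightarrow> fE pD v \<noteq> 0 \<and> phi v = fE pN v / fE pD v"
proof -
  assume v: "v \<in> ball 0 e" "v \<noteq> 0"
  have r: "v \<in> ball 0 r" using Gv v by auto
  have "fE pD v \<noteq> 0" using Gv[OF v(1)] Unz[OF v] r by (simp add: pD_def fE_basic)
  moreover have "phi v = fE pN v / fE pD v"
    using r by (simp add: phi_def Phi7_def pN_def pD_def fE_basic algebra_simps)
  ultimately show ?thesis by simp
qed

lemma Dl_nz: "v \<in> ball 0 e \<Longrightarrow> v \<noteq> 0 \<Longrightarrow> fE pDl v \<noteq> 0"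
  using Gv[of v] Gom4[of v] K_kf[of v] by (simp add: pDl_def)

lemma phi_deriv: assumes v: "v \<in> ball 0 e" "v \<noteq> 0"
  shows "(phi has_field_derivative phi v * (fE pQ v / (CU v * fE pDl v))) (at v)"
proof -
  have r: "v \<in> ball 0 r" and C: "CU v \<noteq> 0" using Gv v by auto
  note pr = phi_rat[OF v]
  have d: "((\<lambda>x. fE pN x / fE pD x) has_field_derivative
      ((fE (d2 pN) v / CU v) * fE pD v - fE pN v * (fE (d2 pD) v / CU v)) / (fE pD v * fE pD v)) (at v)"
    unfolding fE_def CU_def using C unfolding CU_def
    by (intro DERIV_divide ev_deriv[OF r]) (use pr in \<open>auto simp: fE_def\<close>)
  have "ev (add2 (mul2 (add2 (mul2 (d2 pN) pD) (sm2 (-1) (mul2 pN (d2 pD)))) pDl) (sm2 (-1) (mul2 (mul2 pN pD) pQ))) (U v) v = 0"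
    using chk_phi unfolding pz_def ev_def by (simp add: pe_zero)
  then have I: "(fE (d2 pN) v * fE pD v - fE pN v * fE (d2 pD) v) * fE pDl v = fE pN v * fE pD v * fE pQ v"
    using r by (simp add: fE_def[symmetric] algebra_simps)
  have eq: "((fE (d2 pN) v / CU v) * fE pD v - fE pN v * (fE (d2 pD) v / CU v)) / (fE pD v * fE pD v)
      = phi v * (fE pQ v / (CU v * fE pDl v))"
    using pr C Dl_nz[OF v] I by (simp add: field_simps)
  have "(phi has_field_derivative ((fE (d2 pN) v / CU v) * fE pD v - fE pN v * (fE (d2 pD) v / CU v)) / (fE pD v * fE pD v)) (at v)"
  proof (rule has_field_derivative_transform_within_open[OF d, of "ball 0 e - {0}"])
    show "open (ball (0::complex) e - {0})" by (simp add: open_delete)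
    show "v \<in> ball 0 e - {0}" using v by auto
    fix x :: complex assume "x \<in> ball 0 e - {0}"
    then show "fE pN x / fE pD x = phi x" using phi_rat by auto
  qed
  then show ?thesis using eq by simp
qed

end
end



lemma li_ex: "f holomorphic_on S \<Longrightarrow> \<xi> \<in> S \<Longrightarrow> open S \<Longrightarrow> deriv f \<xi> \<noteq> 0 \<Longrightarrow>
   \<exists>r>0. ball \<xi> r \<subseteq> S \<and> inj_on f (ball \<xi> r)"
  by (metis has_complex_derivative_locally_injective)

lemma inv_ex: "f holomorphic_on S \<Longrightarrow> open S \<Longrightarrow> inj_on f S \<Longrightarrow>
   \<exists>g. g holomorphic_on (f ` S) \<and> (\<forall>z\<in>S. deriv f z * deriv g (f z) = 1) \<and> (\<forall>z\<in>S. g (f z) = z)"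
  by (metis holomorphic_has_inverse)

definition stepchk :: "pr \<Rightarrow> pr \<Rightarrow> pr \<Rightarrow> int \<Rightarrow> nat \<Rightarrow> pr \<Rightarrow> int \<Rightarrow> nat \<Rightarrow> pr" where
  "stepchk l dl A k m B k' ee = add2 (sm2 k' (mul2 pDl (add2 (mul2 (mul2 l A) pQ)
      (sm2 14 (mul2 dl (add2 (mul2 (d2 A) pQ) (sm2 (- int m) (mul2 A (d2 pQ)))))))))
      (sm2 (-1) (sm2 (14 * k) (mul2 dl (mul2 B (pow2 pQ ee)))))"

lemma pz_ev0: "pz X \<Longrightarrow> ev X u v = 0"
  unfolding pz_def ev_def by (simp add: pe_zero)

lemma step_alg:
  fixes C dl l A A' Q Q' B Dl h k k' :: complex and m m' ee :: nat
  assumes nz: "C \<noteq> 0" "dl \<noteq> 0" "Q \<noteq> 0" "Dl \<noteq> 0" "k \<noteq> 0" "k' \<noteq> 0" and mm: "m + 2 = m' + ee"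
    and eq: "k' * (Dl * (l * A * Q + 14 * (dl * (A' * Q - of_nat m * (A * Q'))))) = 14 * k * (dl * (B * Q ^ ee))"
  shows "(h * (l / (14 * C * dl)) * (A / (k * Q ^ m)) + h * ((A' * Q - of_nat m * A * Q') / (C * k * Q ^ (m + 1))))
      / (Q / (C * Dl)) = h * (B / (k' * Q ^ m'))"
proof -
  have e1: "h * (l / (14 * C * dl)) * (A / (k * Q ^ m)) + h * ((A' * Q - of_nat m * A * Q') / (C * k * Q ^ (m + 1)))
      = h * (l * A * Q + 14 * (dl * (A' * Q - of_nat m * (A * Q')))) / (14 * C * dl * k * Q ^ (m + 1))"
    using nz by (simp add: field_simps)
  have e2: "l * A * Q + 14 * (dl * (A' * Q - of_nat m * (A * Q'))) = 14 * k * (dl * (B * Q ^ ee)) / (k' * Dl)"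
    using eq nz by (simp add: field_simps)
  have e3: "Q ^ (m + 1) * Q = Q ^ m' * Q ^ ee"
  proof -
    have "Q ^ (m + 1) * Q = Q ^ (m + 2)" by (simp add: power_add power2_eq_square)
    also have "\<dots> = Q ^ (m' + ee)" using mm by simp
    finally show ?thesis by (simp add: power_add)
  qed
  have "(h * (l / (14 * C * dl)) * (A / (k * Q ^ m)) + h * ((A' * Q - of_nat m * A * Q') / (C * k * Q ^ (m + 1))))
      / (Q / (C * Dl)) = h * (14 * k * (dl * (B * Q ^ ee)) / (k' * Dl)) / (14 * C * dl * k * Q ^ (m + 1)) / (Q / (C * Dl))"
    unfolding e1 e2 ..
  also have "\<dots> = h * B * Q ^ ee / (k' * (Q ^ (m + 1) * Q))"
    using nz by (simp add: field_simps)
  also have "\<dots> = h * B * Q ^ ee / (k' * (Q ^ m' * Q ^ ee))" by (simp only: e3)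
  also have "\<dots> = h * (B / (k' * Q ^ m'))" using nz by (simp add: field_simps)
  finally show ?thesis .
qed


definition odechk :: "pr \<Rightarrow> pr \<Rightarrow> pr \<Rightarrow> int \<Rightarrow> int \<Rightarrow> int \<Rightarrow> int \<Rightarrow> int \<Rightarrow> pr" where
  "odechk A1 A2 A3 al1 al2 be0 be1 be2 = add2 (mul2 pD (add2 (sm2 2744 A3) (add2 (sm2 al2 (mul2 A2 (pow2 pQ 2))) (sm2 al1 (mul2 A1 (pow2 pQ 4))))))
     (sm2 (-1) (mul2 pN (add2 (sm2 2744 A3) (add2 (sm2 be2 (mul2 A2 (pow2 pQ 2))) (add2 (sm2 be1 (mul2 A1 (pow2 pQ 4))) (sm2 be0 (pow2 pQ 5)))))))"

lemma ode_alg: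
  fixes N D Q A1 A2 A3 c1 c2 s1 s2 s3 h :: complex
  assumes nz: "D \<noteq> 0" "Q \<noteq> 0"
    and eq: "D * (2744 * A3 + (2744 * 7 * c1) * (A2 * Q^2) + (2744 * 49 * c2) * (A1 * Q^4))
        = N * (2744 * A3 + (2744 * 7 * s1) * (A2 * Q^2) + (2744 * 49 * s2) * (A1 * Q^4) + (2744 * 343 * s3) * Q^5)"
  shows "h * (A3 / (343 * Q^5)) + c1 * (h * (A2 / (49 * Q^3))) + c2 * (h * (A1 / (7 * Q^1)))
      = N / D * (h * (A3 / (343 * Q^5)) + s1 * (h * (A2 / (49 * Q^3))) + s2 * (h * (A1 / (7 * Q^1))) + s3 * (h * (1 / (1 * Q^0))))"
proof -
  have X: "2744 * A3 + (2744 * 7 * c1) * (A2 * Q^2) + (2744 * 49 * c2) * (A1 * Q^4)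
        = N * (2744 * A3 + (2744 * 7 * s1) * (A2 * Q^2) + (2744 * 49 * s2) * (A1 * Q^4) + (2744 * 343 * s3) * Q^5) / D"
    using eq nz by (simp add: eq_divide_eq mult.commute)
  have "h * (A3 / (343 * Q^5)) + c1 * (h * (A2 / (49 * Q^3))) + c2 * (h * (A1 / (7 * Q^1)))
      = h * (2744 * A3 + (2744 * 7 * c1) * (A2 * Q^2) + (2744 * 49 * c2) * (A1 * Q^4)) / (2744 * 343 * Q^5)"
    using nz by (simp add: field_simps eval_nat_numeral)
  also have "\<dots> = h * (N * (2744 * A3 + (2744 * 7 * s1) * (A2 * Q^2) + (2744 * 49 * s2) * (A1 * Q^4) + (2744 * 343 * s3) * Q^5) / D) / (2744 * 343 * Q^5)"
    using eq nz by (simp only: X)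
  also have "\<dots> = N / D * (h * (A3 / (343 * Q^5)) + s1 * (h * (A2 / (49 * Q^3))) + s2 * (h * (A1 / (7 * Q^1))) + s3 * (h * (1 / (1 * Q^0))))"
    using nz by (simp add: field_simps eval_nat_numeral)
  finally show ?thesis .
qed

context E7 begin
context fixes e assumes Ge: "G e" begin

definition "pp A k m v = fE A v / (of_int k * fE pQ v ^ m)"

lemma pp_holo: "k \<noteq> 0 \<Longrightarrow> pp A k m holomorphic_on ball 0 e"
  unfolding pp_def[abs_def] using Gv[OF Ge] Bsub[OF GB[OF Ge]]
  by (intro holomorphic_intros holo_fE) auto

lemma pp_deriv: assumes v: "v \<in> ball 0 e" and k: "k \<noteq> 0"
  shows "(pp A k m has_field_derivative
     (fE (d2 A) v * fE pQ v - of_nat m * fE A v * fE (d2 pQ) v) / (CU v * of_int k * fE pQ v ^ (m + 1))) (at v)"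
proof -
  have r: "v \<in> ball 0 r" and C: "CU v \<noteq> 0" and Q: "fE pQ v \<noteq> 0" using Gv[OF Ge v] by auto
  have dA: "(fE A has_field_derivative fE (d2 A) v / CU v) (at v)"
    using ev_deriv[OF r] C unfolding fE_def[abs_def] CU_def by auto
  have dQ: "(fE pQ has_field_derivative fE (d2 pQ) v / CU v) (at v)"
    using ev_deriv[OF r] C unfolding fE_def[abs_def] CU_def by auto
  have dd: "((\<lambda>x. of_int k * fE pQ x ^ m) has_field_derivative of_int k * (of_nat m * (fE (d2 pQ) v / CU v) * fE pQ v ^ (m - Suc 0))) (at v)"
    by (rule DERIV_cmult) (rule DERIV_cong[OF DERIV_power[OF dQ]], simp)
  have d: "(pp A k m has_field_derivative
     ((fE (d2 A) v / CU v) * (of_int k * fE pQ v ^ m) - fE A v * (of_int k * (of_nat m * (fE (d2 pQ) v / CU v) * fE pQ v ^ (m - Suc 0))))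
      / ((of_int k * fE pQ v ^ m) * (of_int k * fE pQ v ^ m))) (at v)"
    unfolding pp_def[abs_def] using k Q by (intro DERIV_divide dA dd) auto
  have "((fE (d2 A) v / CU v) * (of_int k * fE pQ v ^ m) - fE A v * (of_int k * (of_nat m * (fE (d2 pQ) v / CU v) * fE pQ v ^ (m - Suc 0))))
      / ((of_int k * fE pQ v ^ m) * (of_int k * fE pQ v ^ m))
      = (fE (d2 A) v * fE pQ v - of_nat m * fE A v * fE (d2 pQ) v) / (CU v * of_int k * fE pQ v ^ (m + 1))"
  proof (cases m)
    case 0 then show ?thesis using C Q k by (simp add: field_simps)
  next
    case (Suc j) then show ?thesis using C Q k by (simp add: field_simps)
  qed
  with d show ?thesis by simp
qed

lemma F_step:
  assumes g: "goodfl (flof fs) (ball 0 e)"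
    and fe: "\<forall>(n,k,P,f)\<in>set fs. \<forall>x\<in>ball 0 e. x^k * f x = ev P (U x) x"
    and ks: "ksum fs = 0" and v: "v \<in> ball 0 e" "v \<noteq> 0"
    and chk: "pz (stepchk (fst (lsum (plof fs))) (snd (lsum (plof fs))) A k m B k' ee)"
    and mm: "m + 2 = m' + ee" and k: "k \<noteq> 0" "k' \<noteq> 0"
  shows "\<exists>D. ((\<lambda>x. hfun (flof fs) x * pp A k m x) has_field_derivative D) (at v) \<and>
     D / (fE pQ v / (CU v * fE pDl v)) = hfun (flof fs) v * pp B k' m' v"
proof -
  let ?l = "fst (lsum (plof fs))" and ?dl = "snd (lsum (plof fs))" and ?h = "hfun (flof fs) v"
  have r: "v \<in> ball 0 r" and C: "CU v \<noteq> 0" and Q: "fE pQ v \<noteq> 0" using Gv[OF Ge v(1)] by auto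
  have S: "open (ball (0::complex) e)" "ball 0 e \<subseteq> ball 0 r" using Bsub[OF GB[OF Ge]] by auto
  have Call: "\<forall>x\<in>ball 0 e. pe CCp (U x) \<noteq> 0" using Gv[OF Ge] by (auto simp: CU_def)
  note hd = hfun_dlog[OF S Call g fe ks v]
  have dl: "fE ?dl v \<noteq> 0" using hd by (simp add: fE_def)
  have Hd: "(hfun (flof fs) has_field_derivative ?h * (fE ?l v / (14 * CU v * fE ?dl v))) (at v)"
    using hd by (simp add: fE_def CU_def)
  note pd = pp_deriv[OF v(1) k(1), of A m]
  have D: "((\<lambda>x. hfun (flof fs) x * pp A k m x) has_field_derivative
     ?h * (fE ?l v / (14 * CU v * fE ?dl v)) * pp A k m v +
     (fE (d2 A) v * fE pQ v - of_nat m * fE A v * fE (d2 pQ) v) / (CU v * of_int k * fE pQ v ^ (m + 1)) * ?h) (at v)"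
    by (rule DERIV_mult[OF Hd pd])
  have "ev (stepchk ?l ?dl A k m B k' ee) (U v) v = 0" by (rule pz_ev0[OF chk])
  then have "fE (stepchk ?l ?dl A k m B k' ee) v = 0" by (simp add: fE_def)
  then have eq: "of_int k' * (fE pDl v * (fE ?l v * fE A v * fE pQ v + 14 * (fE ?dl v * (fE (d2 A) v * fE pQ v - of_nat m * (fE A v * fE (d2 pQ) v)))))
     = 14 * of_int k * (fE ?dl v * (fE B v * fE pQ v ^ ee))"
    unfolding stepchk_def using r by (simp add: algebra_simps)
  have Dl: "fE pDl v \<noteq> 0" using Dl_nz[OF Ge v] .
  have "(?h * (fE ?l v / (14 * CU v * fE ?dl v)) * (fE A v / (of_int k * fE pQ v ^ m)) +
      ?h * ((fE (d2 A) v * fE pQ v - of_nat m * fE A v * fE (d2 pQ) v) / (CU v * of_int k * fE pQ v ^ (m + 1))))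
      / (fE pQ v / (CU v * fE pDl v)) = ?h * (fE B v / (of_int k' * fE pQ v ^ m'))"
    by (rule step_alg[OF C dl Q Dl _ _ mm eq]) (use k in auto)
  then have "(?h * (fE ?l v / (14 * CU v * fE ?dl v)) * pp A k m v +
     (fE (d2 A) v * fE pQ v - of_nat m * fE A v * fE (d2 pQ) v) / (CU v * of_int k * fE pQ v ^ (m + 1)) * ?h)
      / (fE pQ v / (CU v * fE pDl v)) = ?h * pp B k' m' v"
    unfolding pp_def by (simp add: ac_simps)
  with D show ?thesis by blast
qed

lemma pp_one: "pp ([1],[]) 1 0 v = 1" by (simp add: pp_def fE_def)

lemma main_gen:
  fixes fs A1 A2 A3 and a1 a2 a3 b1 b2 :: complex and al1 al2 be0 be1 be2 :: int
  defines "L \<equiv> fst (lsum (plof fs))" and "DL \<equiv> snd (lsum (plof fs))"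
  assumes g: "goodfl (flof fs) (ball 0 e)"
    and fe: "\<forall>(n,k,P,f)\<in>set fs. \<forall>x\<in>ball 0 e. x^k * f x = ev P (U x) x"
    and ks: "ksum fs = 0"
    and f0: "\<forall>(n,f)\<in>set (flof fs). f 0 = 1"
    and c0: "pz (stepchk L DL ([1],[]) 1 0 A1 7 1)"
    and c1: "pz (stepchk L DL A1 7 1 A2 49 0)"
    and c2: "pz (stepchk L DL A2 49 3 A3 343 0)"
    and co: "pz (odechk A1 A2 A3 al1 al2 be0 be1 be2)"
    and pal: "of_int al2 = 2744 * 7 * (b1 + b2 - 2)" "of_int al1 = 2744 * 49 * ((b1 - 1) * (b2 - 1))"
      "of_int be2 = 2744 * 7 * (a1 + a2 + a3)" "of_int be1 = 2744 * 49 * (a1 * a2 + a1 * a3 + a2 * a3)"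
      "of_int be0 = 2744 * 343 * (a1 * a2 * a3)"
    and z: "ev A1 0 0 = 0" "ev A2 0 0 = 0" "ev A3 0 0 = 0"
    and b: "\<forall>n::nat. of_nat n + b1 \<noteq> 0" "\<forall>n::nat. of_nat n + b2 \<noteq> 0"
  shows "eventually (\<lambda>v. hyp3F2 a1 a2 a3 b1 b2 (phi v) = hfun (flof fs) v) (nhds 0)"
proof -
  let ?H = "hfun (flof fs)"
  have Hh: "?H holomorphic_on ball 0 e" by (rule hfun_holo[OF g])
  have H0: "?H 0 = 1" by (rule hfun_0[OF f0])
  note Bo' = Bo[OF GB[OF Ge]]
  have dphi0: "deriv phi 0 \<noteq> 0" using phi_deriv0[OF Ge] by simp
  have "\<exists>s>0. ball (0::complex) s \<subseteq> ball 0 e \<and> inj_on phi (ball 0 s)"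
    by (rule li_ex[OF phi_holo[OF Ge] Bo'(2) Bo'(1) dphi0])
  then obtain s where s: "s > 0" "ball (0::complex) s \<subseteq> ball 0 e" "inj_on phi (ball (0::complex) s)"
    by blast
  have phs: "phi holomorphic_on ball 0 s" using phi_holo[OF Ge] s(2) by (rule holomorphic_on_subset)
  obtain \<psi> where \<psi>h: "\<psi> holomorphic_on phi ` ball (0::complex) s"
    and \<psi>d: "\<And>z. z \<in> ball 0 s \<Longrightarrow> deriv phi z * deriv \<psi> (phi z) = 1"
    and \<psi>i: "\<And>z. z \<in> ball 0 s \<Longrightarrow> \<psi> (phi z) = z"
    using inv_ex[OF phs open_ball s(3)] by auto
  have To: "open (phi ` ball (0::complex) s)" by (rule open_mapping_thm3[OF phs open_ball s(3)])
  have phi0: "phi 0 = 0" using phi_eq[OF Ge Bo'(2)] by simp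
  have "0 \<in> phi ` ball (0::complex) s" using phi0 s(1) by (metis centre_in_ball imageI)
  then obtain \<delta> where \<delta>: "\<delta> > 0" "ball (0::complex) \<delta> \<subseteq> phi ` ball 0 s"
    using To open_contains_ball by blast
  have \<psi>in: "\<psi> z \<in> ball 0 s \<and> phi (\<psi> z) = z" if "z \<in> ball (0::complex) \<delta>" for z
  proof -
    from that \<delta> obtain w where w: "w \<in> ball 0 s" "z = phi w" by blast
    then show ?thesis using \<psi>i by auto
  qed
  have \<psi>0: "\<psi> 0 = 0" using \<psi>i[of 0] phi0 s(1) by simp
  have \<psi>e: "\<psi> z \<in> ball 0 e" if "z \<in> ball (0::complex) \<delta>" for z using \<psi>in[OF that] s(2) by blast
  define gg where "gg A k m z = ?H (\<psi> z) * pp A k m (\<psi> z)" for A k m z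
  have gg_holo: "gg A k m holomorphic_on ball (0::complex) \<delta>" if "k \<noteq> 0" for A k m
  proof -
    have F: "(\<lambda>v. ?H v * pp A k m v) holomorphic_on ball 0 e"
      by (intro holomorphic_intros Hh pp_holo[OF that])
    have \<psi>h': "\<psi> holomorphic_on ball (0::complex) \<delta>" using \<psi>h \<delta>(2) by (rule holomorphic_on_subset)
    have "((\<lambda>v. ?H v * pp A k m v) \<circ> \<psi>) holomorphic_on ball (0::complex) \<delta>"
      by (rule holomorphic_on_compose_gen[OF \<psi>h' F]) (use \<psi>e in auto)
    then show ?thesis unfolding gg_def[abs_def] by (simp add: o_def)
  qed
  have gg0: "gg A k m 0 = 0" if "ev A 0 0 = 0" for A k m
    using that by (simp add: gg_def pp_def \<psi>0 fE_def U0)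
  have theta: "\<forall>z\<in>ball (0::complex) \<delta>. z * deriv (gg A k m) z = gg B k' m' z"
    if chk: "pz (stepchk L DL A k m B k' ee)" and mm: "m + 2 = m' + ee" and k: "k \<noteq> 0" "k' \<noteq> 0"
      and zB: "ev B 0 0 = 0" for A B k k' m m' ee
  proof
    fix z :: complex assume zd: "z \<in> ball (0::complex) \<delta>"
    show "z * deriv (gg A k m) z = gg B k' m' z"
    proof (cases "z = 0")
      case True then show ?thesis using gg0[OF zB] by simp
    next
      case False
      define v where "v = \<psi> z"
      have vs: "v \<in> ball 0 s" and pv: "phi v = z" using \<psi>in[OF zd] by (auto simp: v_def)
      have ve: "v \<in> ball 0 e" using vs s(2) by blast
      have v0: "v \<noteq> 0" using pv phi0 False by auto
      obtain D where D: "((\<lambda>x. ?H x * pp A k m x) has_field_derivative D) (at v)"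
        and DL': "D / (fE pQ v / (CU v * fE pDl v)) = ?H v * pp B k' m' v"
        using F_step[OF g fe ks ve v0 chk[unfolded L_def DL_def] mm k] by blast
      have zT: "z \<in> phi ` ball 0 s" using zd \<delta>(2) by blast
      have \<psi>D: "(\<psi> has_field_derivative deriv \<psi> z) (at z)"
        using \<psi>h To zT by (intro holomorphic_derivI) auto
      have cD: "(gg A k m has_field_derivative D * deriv \<psi> z) (at z)"
        unfolding gg_def[abs_def] using DERIV_chain2[OF D[unfolded v_def] \<psi>D] by simp
      have dg: "deriv (gg A k m) z = D * deriv \<psi> z" using cD by (rule DERIV_imp_deriv)
      have dp: "deriv phi v = phi v * (fE pQ v / (CU v * fE pDl v))"
        using phi_deriv[OF Ge ve v0] by (rule DERIV_imp_deriv)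
      have inv: "deriv phi v * deriv \<psi> z = 1" using \<psi>d[OF vs] pv by simp
      have nzs: "fE pQ v \<noteq> 0" "CU v \<noteq> 0" "fE pDl v \<noteq> 0" using Gv[OF Ge ve] Dl_nz[OF Ge ve v0] by auto
      have dp': "deriv phi v = z * fE pQ v / (CU v * fE pDl v)" using dp pv by simp
      have ps: "deriv \<psi> z = CU v * fE pDl v / (z * fE pQ v)"
        using inv unfolding dp' using nzs False by (simp add: field_simps)
      have "z * deriv (gg A k m) z = D / (fE pQ v / (CU v * fE pDl v))"
        unfolding dg ps using nzs False by (simp add: field_simps)
      also have "\<dots> = gg B k' m' z" using DL' by (simp add: gg_def v_def)
      finally show ?thesis .
    qed
  qed
  have t0: "\<forall>z\<in>ball (0::complex) \<delta>. z * deriv (gg ([1],[]) 1 0) z = gg A1 7 1 z"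
    by (rule theta[OF c0 _ _ _ z(1)]) auto
  have t1: "\<forall>z\<in>ball (0::complex) \<delta>. z * deriv (gg A1 7 1) z = gg A2 49 3 z"
    by (rule theta[OF c1 _ _ _ z(2)]) auto
  have t2: "\<forall>z\<in>ball (0::complex) \<delta>. z * deriv (gg A2 49 3) z = gg A3 343 5 z"
    by (rule theta[OF c2 _ _ _ z(3)]) auto
  have ode: "gg A3 343 5 z + (b1+b2-2) * gg A2 49 3 z + (b1-1)*(b2-1) * gg A1 7 1 z
       = z * (gg A3 343 5 z + (a1+a2+a3) * gg A2 49 3 z + (a1*a2+a1*a3+a2*a3) * gg A1 7 1 z + a1*a2*a3 * gg ([1],[]) 1 0 z)"
    if zd: "z \<in> ball (0::complex) \<delta>" for z
  proof (cases "z = 0")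
    case True then show ?thesis using gg0[OF z(1)] gg0[OF z(2)] gg0[OF z(3)] by simp
  next
    case False
    define v where "v = \<psi> z"
    have vs: "v \<in> ball 0 s" and pv: "phi v = z" using \<psi>in[OF zd] by (auto simp: v_def)
    have ve: "v \<in> ball 0 e" using vs s(2) by blast
    have v0: "v \<noteq> 0" using pv phi0 False by auto
    have r: "v \<in> ball 0 r" using Gv[OF Ge ve] by auto
    note pr = phi_rat[OF Ge ve v0]
    have Q: "fE pQ v \<noteq> 0" using Gv[OF Ge ve] by auto
    have "ev (odechk A1 A2 A3 al1 al2 be0 be1 be2) (U v) v = 0" by (rule pz_ev0[OF co])
    then have "fE (odechk A1 A2 A3 al1 al2 be0 be1 be2) v = 0" by (simp add: fE_def)
    then have eq0: "fE pD v * (2744 * fE A3 v + of_int al2 * (fE A2 v * fE pQ v ^ 2) + of_int al1 * (fE A1 v * fE pQ v ^ 4))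
       = fE pN v * (2744 * fE A3 v + of_int be2 * (fE A2 v * fE pQ v ^ 2) + of_int be1 * (fE A1 v * fE pQ v ^ 4) + of_int be0 * fE pQ v ^ 5)"
      unfolding odechk_def using r by (simp add: algebra_simps)
    have eq: "fE pD v * (2744 * fE A3 v + (2744 * 7 * (b1+b2-2)) * (fE A2 v * fE pQ v ^ 2) + (2744 * 49 * ((b1-1)*(b2-1))) * (fE A1 v * fE pQ v ^ 4))
       = fE pN v * (2744 * fE A3 v + (2744 * 7 * (a1+a2+a3)) * (fE A2 v * fE pQ v ^ 2) + (2744 * 49 * (a1*a2+a1*a3+a2*a3)) * (fE A1 v * fE pQ v ^ 4) + (2744 * 343 * (a1*a2*a3)) * fE pQ v ^ 5)"
      using eq0 unfolding pal .
    note oa = ode_alg[OF conjunct1[OF pr] Q eq, of "?H v"]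
    have gz: "gg A k m z = ?H v * (fE A v / (of_int k * fE pQ v ^ m))" for A k m
      by (simp add: gg_def v_def pp_def)
    have zz: "z = fE pN v / fE pD v" using pv conjunct2[OF pr] by simp
    show ?thesis unfolding gz using oa unfolding zz[symmetric] by (simp add: fE_def)
  qed
  have hu: "\<forall>z\<in>ball (0::complex) \<delta>. hyp3F2 a1 a2 a3 b1 b2 z = gg ([1],[]) 1 0 z"
  proof (rule hyp_unique[OF \<delta>(1) gg_holo gg_holo gg_holo gg_holo _ _ b])
    show "gg ([1], []) 1 0 0 = 1" using H0 by (simp add: gg_def \<psi>0 pp_one)
    show "\<forall>z\<in>ball (0::complex) \<delta>. z * deriv (gg ([1], []) 1 0) z = gg A1 7 1 z \<and>
        z * deriv (gg A1 7 1) z = gg A2 49 3 z \<and> z * deriv (gg A2 49 3) z = gg A3 343 5 z \<and>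
        gg A3 343 5 z + (b1 + b2 - 2) * gg A2 49 3 z + (b1 - 1) * (b2 - 1) * gg A1 7 1 z =
        z * (gg A3 343 5 z + (a1 + a2 + a3) * gg A2 49 3 z + (a1 * a2 + a1 * a3 + a2 * a3) * gg A1 7 1 z +
             a1 * a2 * a3 * gg ([1], []) 1 0 z)"
      using t0 t1 t2 ode by blast
  qed auto
  have ev1: "eventually (\<lambda>v. phi v \<in> ball (0::complex) \<delta>) (nhds 0)"
    by (rule ev_open[OF phi_holo[OF Ge] Bo']) (use phi0 \<delta>(1) in auto)
  have ev2: "eventually (\<lambda>v. v \<in> ball 0 s) (nhds (0::complex))"
    using s(1) by (intro eventually_nhds_in_open) auto
  show ?thesis using ev1 ev2
  proof eventually_elim
    case (elim v)
    then have "hyp3F2 a1 a2 a3 b1 b2 (phi v) = gg ([1],[]) 1 0 (phi v)" using hu by blast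
    also have "\<dots> = ?H v" using \<psi>i[OF elim(2)] by (simp add: gg_def pp_one)
    finally show ?case .
  qed
qed

end
end





definition "pl1 = [(1,pF3),(2,pF4),(6,pF4t),(-7,pG4)]"
definition "L1 = fst (lsum pl1)"
definition "DL1 = snd (lsum pl1)"
lemma c0_1: "pz (stepchk L1 DL1 ([1],[]) 1 0 A1_1 7 1)"
  unfolding stepchk_def L1_def DL1_def pl1_def pN_def pD_def pDl_def pom4_def pK_def pU_def pom8_def pG4_def pQ_def pF3_def pF3t_def pF4_def pF4t_def pG3_def pG4h_def pvmu_def pvpu_def A1_1_def A1_2_def A1_3_def by code_simp
lemma c1_1: "pz (stepchk L1 DL1 A1_1 7 1 A1_2 49 0)"
  unfolding stepchk_def L1_def DL1_def pl1_def pN_def pD_def pDl_def pom4_def pK_def pU_def pom8_def pG4_def pQ_def pF3_def pF3t_def pF4_def pF4t_def pG3_def pG4h_def pvmu_def pvpu_def A1_1_def A1_2_def A1_3_def by code_simp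
lemma c2_1: "pz (stepchk L1 DL1 A1_2 49 3 A1_3 343 0)"
  unfolding stepchk_def L1_def DL1_def pl1_def pN_def pD_def pDl_def pom4_def pK_def pU_def pom8_def pG4_def pQ_def pF3_def pF3t_def pF4_def pF4t_def pG3_def pG4h_def pvmu_def pvpu_def A1_1_def A1_2_def A1_3_def by code_simp
lemma co_1: "pz (odechk A1_1 A1_2 A1_3 (32928) (-21952) (-1715) (-686) (6860))"
  unfolding odechk_def pN_def pD_def pDl_def pom4_def pK_def pU_def pom8_def pG4_def pQ_def pF3_def pF3t_def pF4_def pF4t_def pG3_def pG4h_def pvmu_def pvpu_def A1_1_def A1_2_def A1_3_def by code_simp

definition "pl2 = [(8,pom4),(1,pF3),(8,pF4t),(21,pG4),(-8,pF3t),(-28,pG3)]"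
definition "L2 = fst (lsum pl2)"
definition "DL2 = snd (lsum pl2)"
lemma c0_2: "pz (stepchk L2 DL2 ([1],[]) 1 0 A2_1 7 1)"
  unfolding stepchk_def L2_def DL2_def pl2_def pN_def pD_def pDl_def pom4_def pK_def pU_def pom8_def pG4_def pQ_def pF3_def pF3t_def pF4_def pF4t_def pG3_def pG4h_def pvmu_def pvpu_def A2_1_def A2_2_def A2_3_def by code_simp
lemma c1_2: "pz (stepchk L2 DL2 A2_1 7 1 A2_2 49 0)"
  unfolding stepchk_def L2_def DL2_def pl2_def pN_def pD_def pDl_def pom4_def pK_def pU_def pom8_def pG4_def pQ_def pF3_def pF3t_def pF4_def pF4t_def pG3_def pG4h_def pvmu_def pvpu_def A2_1_def A2_2_def A2_3_def by code_simp
lemma c2_2: "pz (stepchk L2 DL2 A2_2 49 3 A2_3 343 0)"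
  unfolding stepchk_def L2_def DL2_def pl2_def pN_def pD_def pDl_def pom4_def pK_def pU_def pom8_def pG4_def pQ_def pF3_def pF3t_def pF4_def pF4t_def pG3_def pG4h_def pvmu_def pvpu_def A2_1_def A2_2_def A2_3_def by code_simp
lemma co_2: "pz (odechk A2_1 A2_2 A2_3 (-21952) (-5488) (46305) (59682) (23324))"
  unfolding odechk_def pN_def pD_def pDl_def pom4_def pK_def pU_def pom8_def pG4_def pQ_def pF3_def pF3t_def pF4_def pF4t_def pG3_def pG4h_def pvmu_def pvpu_def A2_1_def A2_2_def A2_3_def by code_simp

definition "pl3 = [(14,pom8),(5,pF3t),(77,pG4h),(-32,pU),(-1,pvmu),(-12,pvpu),(-84,pG3)]"
definition "L3 = fst (lsum pl3)"
definition "DL3 = snd (lsum pl3)"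
lemma c0_3: "pz (stepchk L3 DL3 ([1],[]) 1 0 A3_1 7 1)"
  unfolding stepchk_def L3_def DL3_def pl3_def pN_def pD_def pDl_def pom4_def pK_def pU_def pom8_def pG4_def pQ_def pF3_def pF3t_def pF4_def pF4t_def pG3_def pG4h_def pvmu_def pvpu_def A3_1_def A3_2_def A3_3_def by code_simp
lemma c1_3: "pz (stepchk L3 DL3 A3_1 7 1 A3_2 49 0)"
  unfolding stepchk_def L3_def DL3_def pl3_def pN_def pD_def pDl_def pom4_def pK_def pU_def pom8_def pG4_def pQ_def pF3_def pF3t_def pF4_def pF4t_def pG3_def pG4h_def pvmu_def pvpu_def A3_1_def A3_2_def A3_3_def by code_simp
lemma c2_3: "pz (stepchk L3 DL3 A3_2 49 3 A3_3 343 0)"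
  unfolding stepchk_def L3_def DL3_def pl3_def pN_def pD_def pDl_def pom4_def pK_def pU_def pom8_def pG4_def pQ_def pF3_def pF3t_def pF4_def pF4t_def pG3_def pG4h_def pvmu_def pvpu_def A3_1_def A3_2_def A3_3_def by code_simp
lemma co_3: "pz (odechk A3_1 A3_2 A3_3 (65856) (27440) (833833) (377986) (56252))"
  unfolding odechk_def pN_def pD_def pDl_def pom4_def pK_def pU_def pom8_def pG4_def pQ_def pF3_def pF3t_def pF4_def pF4t_def pG3_def pG4h_def pvmu_def pvpu_def A3_1_def A3_2_def A3_3_def by code_simp




lemma b_nz: "Re x > 0 \<Longrightarrow> \<forall>n::nat. of_nat n + (x::complex) \<noteq> 0"
proof (intro allI notI)
  fix n :: nat assume "Re x > 0" "of_nat n + x = 0"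
  then have "Re (of_nat n + x) = 0" by simp
  then show False using \<open>Re x > 0\<close> by simp
qed

context E7 begin

definition fs1 :: "(int \<times> nat \<times> pr \<times> (complex \<Rightarrow> complex)) list" where
  "fs1 = [(1,0,pF3,fE pF3),(2,0,pF4,fE pF4),(6,0,pF4t,fE pF4t),(-7,0,pG4,fE pG4)]"
definition fs2 :: "(int \<times> nat \<times> pr \<times> (complex \<Rightarrow> complex)) list" where
  "fs2 = [(8,0,pom4,fE pom4),(1,0,pF3,fE pF3),(8,0,pF4t,fE pF4t),(21,0,pG4,fE pG4),(-8,0,pF3t,fE pF3t),(-28,0,pG3,fE pG3)]"
definition fs3 :: "(int \<times> nat \<times> pr \<times> (complex \<Rightarrow> complex)) list" where
  "fs3 = [(14,0,pom8,fE pom8),(5,0,pF3t,fE pF3t),(77,1,pG4h,fg),(-32,2,pU,W),(-1,1,pvmu,fvm),(-12,1,pvpu,fvp),(-84,0,pG3,fE pG3)]"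

lemma plof1: "plof fs1 = pl1" by (simp add: plof_def fs1_def pl1_def)
lemma plof2: "plof fs2 = pl2" by (simp add: plof_def fs2_def pl2_def)
lemma plof3: "plof fs3 = pl3" by (simp add: plof_def fs3_def pl3_def)

context fixes e assumes Ge: "G e" begin

lemma hE: "fE P holomorphic_on ball 0 e" by (rule holo_fE[OF Bsub[OF GB[OF Ge]]])

lemma inb: "v \<in> ball 0 e \<Longrightarrow> f \<in> set allf \<Longrightarrow> f v \<in> ball 1 1" using Gv[OF Ge] by blast

lemma good1: "goodfl (flof fs1) (ball 0 e)"
  using hE inb by (simp add: flof_def fs1_def allf_def)
lemma good2: "goodfl (flof fs2) (ball 0 e)"
  using hE inb by (simp add: flof_def fs2_def allf_def)
lemma good3: "goodfl (flof fs3) (ball 0 e)"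
  using hE inb holo_W[OF GB[OF Ge]] holo_fvm[OF GB[OF Ge]] holo_fvp[OF GB[OF Ge]] holo_fg[OF GB[OF Ge]]
  by (simp add: flof_def fs3_def allf_def)

lemma fe1: "\<forall>(n,k,P,f)\<in>set fs1. \<forall>x\<in>ball 0 e. x^k * f x = ev P (U x) x"
  by (simp add: fs1_def fE_def)
lemma fe2: "\<forall>(n,k,P,f)\<in>set fs2. \<forall>x\<in>ball 0 e. x^k * f x = ev P (U x) x"
  by (simp add: fs2_def fE_def)
lemma fe3: "\<forall>(n,k,P,f)\<in>set fs3. \<forall>x\<in>ball 0 e. x^k * f x = ev P (U x) x"
proof -
  have "x * fg x = ev pG4h (U x) x" "x^2 * W x = ev pU (U x) x" "x * fvm x = ev pvmu (U x) x"
     "x * fvp x = ev pvpu (U x) x" if "x \<in> ball 0 e" for x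
    using UW[OF Ge that] by (simp_all add: fg_def fvm_def fvp_def ev_def pG4h_def pU_def pvmu_def pvpu_def
       algebra_simps power2_eq_square power3_eq_cube)
  then show ?thesis by (simp add: fs3_def fE_def)
qed

lemma f0_1: "\<forall>(n,f)\<in>set (flof fs1). f 0 = 1"
  by (simp add: flof_def fs1_def fE0 pF3_def pF4_def pF4t_def pG4_def)
lemma f0_2: "\<forall>(n,f)\<in>set (flof fs2). f 0 = 1"
  by (simp add: flof_def fs2_def fE0 pF3_def pF3t_def pF4t_def pG4_def pom4_def pG3_def)
lemma f0_3: "\<forall>(n,f)\<in>set (flof fs3). f 0 = 1"
  by (simp add: flof_def fs3_def fE0 pF3t_def pom8_def pG3_def W0 fg_def fvm_def fvp_def)

lemma evh1: "eventually (\<lambda>v. hyp3F2 (-1/14) (1/14) (5/14) (1/7) (5/7) (phi v) = hfun (flof fs1) v) (nhds 0)"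
  by (rule main_gen[OF Ge good1 fe1 _ f0_1, unfolded plof1, folded L1_def DL1_def,
        OF _ c0_1 c1_1 c2_1 co_1])
     (simp_all add: ksum_def fs1_def A1_1_def A1_2_def A1_3_def ev_def b_nz)

lemma evh2: "eventually (\<lambda>v. hyp3F2 (3/14) (5/14) (9/14) (3/7) (9/7) (phi v) = hfun (flof fs2) v) (nhds 0)"
  by (rule main_gen[OF Ge good2 fe2 _ f0_2, unfolded plof2, folded L2_def DL2_def,
        OF _ c0_2 c1_2 c2_2 co_2])
     (simp_all add: ksum_def fs2_def A2_1_def A2_2_def A2_3_def ev_def b_nz)

lemma evh3: "eventually (\<lambda>v. hyp3F2 (11/14) (13/14) (17/14) (11/7) (13/7) (phi v) = hfun (flof fs3) v) (nhds 0)"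
  by (rule main_gen[OF Ge good3 fe3 _ f0_3, unfolded plof3, folded L3_def DL3_def,
        OF _ c0_3 c1_3 c2_3 co_3])
     (simp_all add: ksum_def fs3_def A3_1_def A3_2_def A3_3_def ev_def b_nz)

lemma nzf: "v \<in> ball 0 e \<Longrightarrow> f \<in> set allf \<Longrightarrow> f v \<noteq> 0"
  using inb[of v f] by auto

lemma fEs: "fE pF3 v = F3 (U v) v" "fE pF3t v = F3t (U v) v" "fE pF4 v = F4 (U v) v" "fE pF4t v = F4t (U v) v"
  "fE pG4 v = G4 (U v) v" "fE pG3 v = G3 (U v) v" "fE pom4 v = 1 - 4 * U v" "fE pom8 v = 1 - 8 * U v"
  by (simp_all add: fE_def ev_def pF3_def pF3t_def pF4_def pF4t_def pG4_def pG3_def pom4_def pom8_def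
      F3_def F3t_def F4_def F4t_def G4_def G3_def algebra_simps power2_eq_square)

lemma pow1: "v \<in> ball 0 e \<Longrightarrow> hfun (flof fs1) v ^ 14 * G4 (U v) v ^ 7 = F3 (U v) v * F4 (U v) v ^ 2 * F4t (U v) v ^ 6"
proof -
  assume v: "v \<in> ball 0 e"
  have nz: "G4 (U v) v \<noteq> 0" using nzf[OF v, of "fE pG4"] by (simp add: allf_def fEs)
  have "hfun (flof fs1) v ^ 14 = F3 (U v) v * F4 (U v) v ^ 2 * F4t (U v) v ^ 6 / G4 (U v) v ^ 7"
    using hfun_pow[OF good1 v] by (simp add: flof_def fs1_def fEs power_int_minus field_simps)
  then show ?thesis using nz by (simp add: field_simps)
qed

lemma pow2: "v \<in> ball 0 e \<Longrightarrow> hfun (flof fs2) v ^ 14 * F3t (U v) v ^ 8 * G3 (U v) v ^ 28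
   = (1 - 4 * U v) ^ 8 * F3 (U v) v * F4t (U v) v ^ 8 * G4 (U v) v ^ 21"
proof -
  assume v: "v \<in> ball 0 e"
  have nz: "F3t (U v) v \<noteq> 0" "G3 (U v) v \<noteq> 0"
    using nzf[OF v, of "fE pF3t"] nzf[OF v, of "fE pG3"] by (simp_all add: allf_def fEs)
  have "hfun (flof fs2) v ^ 14 = (1 - 4 * U v) ^ 8 * F3 (U v) v * F4t (U v) v ^ 8 * G4 (U v) v ^ 21
      / (F3t (U v) v ^ 8 * G3 (U v) v ^ 28)"
    using hfun_pow[OF good2 v] by (simp add: flof_def fs2_def fEs power_int_minus field_simps)
  then show ?thesis using nz by (simp add: field_simps)
qed

lemma pow3: "v \<in> ball 0 e \<Longrightarrow> hfun (flof fs3) v ^ 14 * (U v ^ 32 * (v - U v) * (v + U v) ^ 12 * G3 (U v) v ^ 84)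
   = (1 - 8 * U v) ^ 14 * F3t (U v) v ^ 5 * G4h (U v) v ^ 77"
proof -
  assume v: "v \<in> ball 0 e"
  have nz: "G3 (U v) v \<noteq> 0" "W v \<noteq> 0" "fvm v \<noteq> 0" "fvp v \<noteq> 0"
    using nzf[OF v, of "fE pG3"] nzf[OF v, of W] nzf[OF v, of fvm] nzf[OF v, of fvp] by (simp_all add: allf_def fEs)
  have h: "hfun (flof fs3) v ^ 14 = (1 - 8 * U v) ^ 14 * F3t (U v) v ^ 5 * fg v ^ 77
      / (W v ^ 32 * fvm v * fvp v ^ 12 * G3 (U v) v ^ 84)"
    using hfun_pow[OF good3 v] by (simp add: flof_def fs3_def fEs power_int_minus field_simps)
  have u: "U v = v^2 * W v" by (rule UW[OF Ge v])
  have e1: "U v ^ 32 * (v - U v) * (v + U v) ^ 12 = v ^ 77 * (W v ^ 32 * fvm v * fvp v ^ 12)"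
  proof -
    have a: "v - U v = v * fvm v" "v + U v = v * fvp v" unfolding fvm_def fvp_def u
      by (simp_all add: algebra_simps power2_eq_square)
    have b: "U v ^ 32 = v ^ 64 * W v ^ 32" unfolding u by (simp add: power_mult_distrib flip: power_mult)
    have c: "v * v ^ 76 = v ^ 77" by (simp flip: power_Suc)
    show ?thesis unfolding a b by (simp add: power_mult_distrib algebra_simps c flip: power_add)
  qed
  have e2: "G4h (U v) v = v * fg v"
    unfolding G4h_def fg_def u by (simp add: algebra_simps power2_eq_square power3_eq_cube)
  show ?thesis unfolding e1 e2 h using nz
    by (simp add: field_simps power_mult_distrib)
qed

end
end

theorem mainTheorem13:
  fixes U :: "complex \<Rightarrow> complex" and r :: real
  assumes "r > 0"
    and "U holomorphic_on ball 0 r"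
    and "U 0 = 0"
    and "\<forall>v\<in>ball 0 r. v^2 = U v * (1 - 11 * U v + 32 * (U v)^2)"
  shows "\<exists>\<rho>>0. \<rho> \<le> r \<and>
    (\<exists>h1 h2 h3.
       h1 holomorphic_on ball 0 \<rho> \<and> h2 holomorphic_on ball 0 \<rho> \<and> h3 holomorphic_on ball 0 \<rho> \<and>
       h1 0 = 1 \<and> h2 0 = 1 \<and> h3 0 = 1 \<and>
       (\<forall>v\<in>ball 0 \<rho>. let u = U v in
          h1 v ^ 14 * G4 u v ^ 7 = F3 u v * F4 u v ^ 2 * F4t u v ^ 6 \<and>
          h2 v ^ 14 * F3t u v ^ 8 * G3 u v ^ 28
            = (1 - 4*u) ^ 8 * F3 u v * F4t u v ^ 8 * G4 u v ^ 21 \<and>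
          h3 v ^ 14 * (u ^ 32 * (v - u) * (v + u) ^ 12 * G3 u v ^ 84)
            = (1 - 8*u) ^ 14 * F3t u v ^ 5 * G4h u v ^ 77 \<and>
          hyp3F2 (-1/14) (1/14) (5/14) (1/7) (5/7) (Phi7 u v) = h1 v \<and>
          hyp3F2 (3/14) (5/14) (9/14) (3/7) (9/7) (Phi7 u v) = h2 v \<and>
          hyp3F2 (11/14) (13/14) (17/14) (11/7) (13/7) (Phi7 u v) = h3 v))"
proof -
  interpret E: E7 U r using assms by unfold_locales auto
  obtain e where Ge: "E.G e" using E.G_ex by blast
  have e: "e > 0" "e \<le> r" using Ge unfolding E.G_def E.B1_def by auto
  have "eventually (\<lambda>v. hyp3F2 (-1/14) (1/14) (5/14) (1/7) (5/7) (E.phi v) = hfun (flof E.fs1) v \<and>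
      hyp3F2 (3/14) (5/14) (9/14) (3/7) (9/7) (E.phi v) = hfun (flof E.fs2) v \<and>
      hyp3F2 (11/14) (13/14) (17/14) (11/7) (13/7) (E.phi v) = hfun (flof E.fs3) v) (nhds 0)"
    using E.evh1[OF Ge] E.evh2[OF Ge] E.evh3[OF Ge] by eventually_elim auto
  then obtain \<rho>0 where \<rho>0: "\<rho>0 > 0" "\<forall>v\<in>ball 0 \<rho>0. hyp3F2 (-1/14) (1/14) (5/14) (1/7) (5/7) (E.phi v) = hfun (flof E.fs1) v \<and>
      hyp3F2 (3/14) (5/14) (9/14) (3/7) (9/7) (E.phi v) = hfun (flof E.fs2) v \<and>
      hyp3F2 (11/14) (13/14) (17/14) (11/7) (13/7) (E.phi v) = hfun (flof E.fs3) v"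
    using ev_ball by blast
  define \<rho> where "\<rho> = min \<rho>0 e"
  have \<rho>: "\<rho> > 0" "\<rho> \<le> r" using \<rho>0 e by (auto simp: \<rho>_def)
  have sub: "ball (0::complex) \<rho> \<subseteq> ball 0 e" "ball (0::complex) \<rho> \<subseteq> ball 0 \<rho>0" by (auto simp: \<rho>_def)
  have hol: "hfun (flof E.fs1) holomorphic_on ball 0 \<rho>" "hfun (flof E.fs2) holomorphic_on ball 0 \<rho>"
    "hfun (flof E.fs3) holomorphic_on ball 0 \<rho>"
    using holomorphic_on_subset[OF hfun_holo[OF E.good1[OF Ge]] sub(1)]
      holomorphic_on_subset[OF hfun_holo[OF E.good2[OF Ge]] sub(1)]
      holomorphic_on_subset[OF hfun_holo[OF E.good3[OF Ge]] sub(1)] by auto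
  have h0: "hfun (flof E.fs1) 0 = 1" "hfun (flof E.fs2) 0 = 1" "hfun (flof E.fs3) 0 = 1"
    using hfun_0[OF E.f0_1[OF Ge]] hfun_0[OF E.f0_2[OF Ge]] hfun_0[OF E.f0_3[OF Ge]] by auto
  have main: "\<forall>v\<in>ball 0 \<rho>. let u = U v in
          hfun (flof E.fs1) v ^ 14 * G4 u v ^ 7 = F3 u v * F4 u v ^ 2 * F4t u v ^ 6 \<and>
          hfun (flof E.fs2) v ^ 14 * F3t u v ^ 8 * G3 u v ^ 28
            = (1 - 4*u) ^ 8 * F3 u v * F4t u v ^ 8 * G4 u v ^ 21 \<and>
          hfun (flof E.fs3) v ^ 14 * (u ^ 32 * (v - u) * (v + u) ^ 12 * G3 u v ^ 84)
            = (1 - 8*u) ^ 14 * F3t u v ^ 5 * G4h u v ^ 77 \<and>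
          hyp3F2 (-1/14) (1/14) (5/14) (1/7) (5/7) (Phi7 u v) = hfun (flof E.fs1) v \<and>
          hyp3F2 (3/14) (5/14) (9/14) (3/7) (9/7) (Phi7 u v) = hfun (flof E.fs2) v \<and>
          hyp3F2 (11/14) (13/14) (17/14) (11/7) (13/7) (Phi7 u v) = hfun (flof E.fs3) v"
  proof
    fix v :: complex assume v: "v \<in> ball 0 \<rho>"
    have ve: "v \<in> ball 0 e" and v0: "v \<in> ball 0 \<rho>0" using v sub by auto
    show "let u = U v in
          hfun (flof E.fs1) v ^ 14 * G4 u v ^ 7 = F3 u v * F4 u v ^ 2 * F4t u v ^ 6 \<and>
          hfun (flof E.fs2) v ^ 14 * F3t u v ^ 8 * G3 u v ^ 28
            = (1 - 4*u) ^ 8 * F3 u v * F4t u v ^ 8 * G4 u v ^ 21 \<and>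
          hfun (flof E.fs3) v ^ 14 * (u ^ 32 * (v - u) * (v + u) ^ 12 * G3 u v ^ 84)
            = (1 - 8*u) ^ 14 * F3t u v ^ 5 * G4h u v ^ 77 \<and>
          hyp3F2 (-1/14) (1/14) (5/14) (1/7) (5/7) (Phi7 u v) = hfun (flof E.fs1) v \<and>
          hyp3F2 (3/14) (5/14) (9/14) (3/7) (9/7) (Phi7 u v) = hfun (flof E.fs2) v \<and>
          hyp3F2 (11/14) (13/14) (17/14) (11/7) (13/7) (Phi7 u v) = hfun (flof E.fs3) v"
      unfolding Let_def using E.pow1[OF Ge ve] E.pow2[OF Ge ve] E.pow3[OF Ge ve] \<rho>0(2) v0
      by (simp add: E.phi_def)
  qed
  show ?thesis
    by (rule exI[of _ \<rho>], rule conjI[OF \<rho>(1)], rule conjI[OF \<rho>(2)],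
        rule exI[of _ "hfun (flof E.fs1)"], rule exI[of _ "hfun (flof E.fs2)"], rule exI[of _ "hfun (flof E.fs3)"])
       (use hol h0 main in auto)
qed


end
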